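(* Let $\{C(G_n,S_n)\}_{n\ge1}$ be a family of expanders (with $G_n$ finite groups and $S_n$ symmetric subsets) of degree bounded by $d$. Let $k\ge2$ be an integer and, for each $n$, let $\sigma_{1n},\dots,\sigma_{kn}$ be pairwise commuting automorphisms of $G_n$ of order at most $2$. Let $T_n=S_n\cup\bigcup_i\sigma_{in}(S_n)\cup\bigcup_{i,j}(\sigma_{in}\circ\sigma_{jn})(S_n)\cup\cdots\cup(\sigma_{1n}\circ\sigma_{2n}\circ\cdots\circ\sigma_{kn})(S_n)$, i.e. $T_n=\bigcup_{I\subseteq\{1,\dots,k\}}(\prod_{i\in I}\sigma_{in})(S_n)$. Then: (1) for each $1\le i\le k$, the twisted Cayley graphs $\{C(G_n,T_n)^{\sigma_{in}}\}_n$ form a family of expanders of degree bounded by $2^kd$; (2) for any $1\le i,j\le k$, the eigenvalues of the adjacency operators of $C(G_n,T_n)^{\sigma_{in}}$ and $C(G_n,T_n)^{\sigma_{jn}}$ coincide up to factors of $\pm1$.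
   Context: $C(G,S)$ has vertex set $G$ and an edge from $x$ to $xs$ for each $s\in S$; for an automorphism $\tau$, $C(G,S)^\tau$ has an edge from $x$ to $\tau(xs)$. A family of expanders of degree bounded by $d$ is a sequence of finite undirected graphs of degree at most $d$, together with a constant $\varepsilon>0$ such that each graph is an $\varepsilon$-vertex expander: for every vertex set $A$ with $|A|\le|V|/2$, at least $\varepsilon|A|$ vertices outside $A$ are adjacent to some vertex of $A$. "Up to factors of $\pm1$" means there is a bijection between the multisets of eigenvalues under which each eigenvalue is sent to itself or its negative. *)

theory Defs
  imports "HOL-Algebra.Group" "Jordan_Normal_Form.Char_Poly" "HOL-Library.Multiset"
begin

definition vertex_boundary :: "'a set \<Rightarrow> ('a \<Rightarrow> 'a \<Rightarrow> bool) \<Rightarrow> 'a set \<Rightarrow> 'a set" where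
  "vertex_boundary V adj A = {y \<in> V - A. \<exists>a\<in>A. adj a y}"

definition vertex_expander :: "'a set \<Rightarrow> ('a \<Rightarrow> 'a \<Rightarrow> bool) \<Rightarrow> real \<Rightarrow> bool" where
  "vertex_expander V adj \<epsilon> \<longleftrightarrow>
     (\<forall>A \<subseteq> V. real (card A) \<le> real (card V) / 2 \<longrightarrow>
        real (card (vertex_boundary V adj A)) \<ge> \<epsilon> * real (card A))"

definition undirected_bounded_degree :: "'a set \<Rightarrow> ('a \<Rightarrow> 'a \<Rightarrow> bool) \<Rightarrow> nat \<Rightarrow> bool" where
  "undirected_bounded_degree V adj d \<longleftrightarrow>
     finite V \<and> (\<forall>x\<in>V. \<forall>y\<in>V. adj x y \<longleftrightarrow> adj y x)
     \<and> (\<forall>x y. adj x y \<longrightarrow> x \<in> V \<and> y \<in> V)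
     \<and> (\<forall>x\<in>V. card {y \<in> V. adj x y} \<le> d)"

definition expander_family ::
  "(nat \<Rightarrow> 'a set) \<Rightarrow> (nat \<Rightarrow> 'a \<Rightarrow> 'a \<Rightarrow> bool) \<Rightarrow> nat \<Rightarrow> bool" where
  "expander_family V adj d \<longleftrightarrow>
     (\<forall>n. undirected_bounded_degree (V n) (adj n) d) \<and>
     (\<exists>\<epsilon>>0. \<forall>n. vertex_expander (V n) (adj n) \<epsilon>)"

text \<open>C(G,S)^tau: edge from x to tau(x s) for each s in S. C(G,S) is the case tau = id.\<close>
definition cayley_adj :: "('a, 'b) monoid_scheme \<Rightarrow> 'a set \<Rightarrow> ('a \<Rightarrow> 'a) \<Rightarrow> 'a \<Rightarrow> 'a \<Rightarrow> bool" where
  "cayley_adj G S \<tau> x y \<longleftrightarrow> x \<in> carrier G \<and> (\<exists>s\<in>S. y = \<tau> (x \<otimes>\<^bsub>G\<^esub> s))"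

text \<open>Adjacency operator (counting edges with multiplicity), as a matrix w.r.t. an
  enumeration of the group; its spectrum does not depend on the enumeration.\<close>
definition group_enum :: "('a, 'b) monoid_scheme \<Rightarrow> nat \<Rightarrow> 'a" where
  "group_enum G = (SOME e. bij_betw e {..<card (carrier G)} (carrier G))"

definition cayley_adj_matrix :: "('a, 'b) monoid_scheme \<Rightarrow> 'a set \<Rightarrow> ('a \<Rightarrow> 'a) \<Rightarrow> complex mat" where
  "cayley_adj_matrix G S \<tau> =
     (let N = card (carrier G); e = group_enum G in
      mat N N (\<lambda>(i, j). of_nat (card {s \<in> S. \<tau> (e i \<otimes>\<^bsub>G\<^esub> s) = e j})))"

definition eigenvalues_mset :: "complex mat \<Rightarrow> complex multiset" where
  "eigenvalues_mset A = proots (char_poly A)"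

definition equal_up_to_sign :: "complex multiset \<Rightarrow> complex multiset \<Rightarrow> bool" where
  "equal_up_to_sign M N \<longleftrightarrow>
     (\<exists>xs ys. mset xs = M \<and> mset ys = N \<and> list_all2 (\<lambda>a b. b = a \<or> b = - a) xs ys)"

definition comp_over :: "(nat \<Rightarrow> 'a \<Rightarrow> 'a) \<Rightarrow> nat set \<Rightarrow> 'a \<Rightarrow> 'a" where
  "comp_over \<sigma> I = fold (\<lambda>i f. \<sigma> i \<circ> f) (sorted_list_of_set I) id"

definition twist_closure :: "(nat \<Rightarrow> 'a \<Rightarrow> 'a) \<Rightarrow> nat \<Rightarrow> 'a set \<Rightarrow> 'a set" where
  "twist_closure \<sigma> k S = (\<Union>I \<in> Pow {1..k}. comp_over \<sigma> I ` S)"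

end

theory Submission
  imports Defs "Jordan_Normal_Form.Schur_Decomposition"
begin


lemma proots_linprod: "proots (\<Prod>a\<leftarrow>as. [:- a, 1:]) = mset (as :: complex list)"
proof (induction as)
  case (Cons a as)
  have nz: "(\<Prod>a\<leftarrow>as. [:- a, 1:]) \<noteq> (0::complex poly)" by (auto simp: prod_list_zero_iff)
  have "proots (\<Prod>a\<leftarrow>a # as. [:- a, 1:]) = proots [:- a, 1:] + proots (\<Prod>a\<leftarrow>as. [:- a, 1:])"
    by (simp only: prod_list.Cons list.map) (rule proots_mult, use nz in auto)
  also have "proots [:- a, 1:] = {#a#}" using proots_linear_factor[of "-a"] by simp
  finally show ?case using Cons by simp
qed simp

lemma ut_mult:
  assumes U: "U \<in> carrier_mat n n" and V: "V \<in> carrier_mat n n"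
    and uU: "upper_triangular U" and uV: "upper_triangular V"
  shows "upper_triangular (U * V) \<and> diag_mat (U * V) = map (\<lambda>i. U $$ (i,i) * V $$ (i,i)) [0..<n]"
proof
  show "upper_triangular (U * V)"
  proof (rule upper_triangularI)
    fix i j assume ji: "j < i" and i: "i < dim_row (U * V)"
    have "(U * V) $$ (i, j) = (\<Sum>k<n. U $$ (i,k) * V $$ (k,j))"
      using U V i ji by (auto simp: scalar_prod_def times_mat_def atLeast0LessThan)
    also have "\<dots> = 0"
    proof (rule sum.neutral, intro ballI)
      fix k assume k: "k \<in> {..<n}"
      show "U $$ (i,k) * V $$ (k,j) = 0"
      proof (cases "k < i")
        case True then have "U $$ (i,k) = 0" using upper_triangularD[OF uU True] U i by auto
        then show ?thesis by simp
      next
        case False then have "j < k" using ji by auto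
        then have "V $$ (k,j) = 0" using upper_triangularD[OF uV] V k by auto
        then show ?thesis by simp
      qed
    qed
    finally show "(U * V) $$ (i, j) = 0" .
  qed
  show "diag_mat (U * V) = map (\<lambda>i. U $$ (i,i) * V $$ (i,i)) [0..<n]"
  proof -
    have "(U * V) $$ (i, i) = U $$ (i,i) * V $$ (i,i)" if i: "i < n" for i
    proof -
      have "(U * V) $$ (i, i) = (\<Sum>k<n. U $$ (i,k) * V $$ (k,i))"
        using U V i by (auto simp: scalar_prod_def times_mat_def atLeast0LessThan)
      also have "\<dots> = U $$ (i,i) * V $$ (i,i)"
      proof -
        have r: "(\<Sum>k<n. U $$ (i,k) * V $$ (k,i)) = U $$ (i,i) * V $$ (i,i) + (\<Sum>k\<in>{..<n}-{i}. U $$ (i,k) * V $$ (k,i))"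
          using i by (simp add: sum.remove)
        have "(\<Sum>k\<in>{..<n}-{i}. U $$ (i,k) * V $$ (k,i)) = 0"
        proof (rule sum.neutral, intro ballI)
          fix k assume k: "k \<in> {..<n}-{i}"
          show "U $$ (i,k) * V $$ (k,i) = 0"
          proof (cases "k < i")
            case True then have "U $$ (i,k) = 0" using upper_triangularD[OF uU True] U i by auto
            then show ?thesis by simp
          next
            case False then have "i < k" using k by auto
            then have "V $$ (k,i) = 0" using upper_triangularD[OF uV] V k by auto
            then show ?thesis by simp
          qed
        qed
        then show ?thesis using r by simp
      qed
      finally show ?thesis .
    qed
    then show ?thesis using U V by (auto simp: diag_mat_def)
  qed
qed

lemma eig_sq:
  fixes A :: "complex mat"
  assumes A: "A \<in> carrier_mat n n"
  shows "eigenvalues_mset (A * A) = image_mset (\<lambda>x. x * x) (eigenvalues_mset A)"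
proof -
  obtain as where cA: "char_poly A = (\<Prod>a\<leftarrow>as. [:- a, 1:])" using char_poly_factorized[OF A] by blast
  obtain B P Q where sch: "schur_decomposition A as = (B,P,Q)" by (cases "schur_decomposition A as") auto
  from schur_decomposition[OF A cA sch] have sim: "similar_mat_wit A B P Q"
    and uB: "upper_triangular B" and dB: "diag_mat B = as" by auto
  from similar_mat_witD2[OF A sim] have B: "B \<in> carrier_mat n n" by auto
  have sim2: "similar_mat_wit (A ^\<^sub>m 2) (B ^\<^sub>m 2) P Q" by (rule similar_mat_wit_pow[OF sim])
  have AA: "A ^\<^sub>m 2 = A * A" using A by (simp add: numeral_2_eq_2)
  have BB: "B ^\<^sub>m 2 = B * B" using B by (simp add: numeral_2_eq_2)
  have "char_poly (A * A) = char_poly (B * B)"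
    using sim2 unfolding AA BB similar_mat_def by (intro char_poly_similar) (auto simp: similar_mat_def)
  from ut_mult[OF B B uB uB] have u2: "upper_triangular (B * B)"
    and d2: "diag_mat (B * B) = map (\<lambda>i. B $$ (i,i) * B $$ (i,i)) [0..<n]" by auto
  have "diag_mat (B * B) = map (\<lambda>x. x * x) as"
    unfolding d2 dB[symmetric] using B by (simp add: diag_mat_def)
  then have "char_poly (B * B) = (\<Prod>a\<leftarrow>map (\<lambda>x. x * x) as. [:- a, 1:])"
    using char_poly_upper_triangular[of "B * B" n] u2 B by auto
  then show ?thesis using \<open>char_poly (A * A) = char_poly (B * B)\<close> cA
    unfolding eigenvalues_mset_def using proots_linprod[of "map (\<lambda>x. x * x) as"] proots_linprod[of as] by (simp add: o_def)
qed

lemma sq_sign: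
  fixes xs ys :: "complex list"
  assumes "image_mset (\<lambda>x. x * x) (mset xs) = image_mset (\<lambda>x. x * x) (mset ys)"
  shows "equal_up_to_sign (mset xs) (mset ys)"
  using assms
proof (induction xs arbitrary: ys)
  case Nil
  then show ?case unfolding equal_up_to_sign_def by (intro exI[of _ "[]"]) auto
next
  case (Cons x xs)
  have "x * x \<in># image_mset (\<lambda>x. x * x) (mset ys)" using Cons.prems by (metis mset.simps(2) image_mset_add_mset union_single_eq_member)
  then obtain y where y: "y \<in> set ys" "y * y = x * x" by auto
  then have yx: "y = x \<or> y = - x"
    by (metis add.inverse_inverse mult_minus_left mult_minus_right square_eq_iff)
  have "image_mset (\<lambda>x. x * x) (mset xs) = image_mset (\<lambda>x. x * x) (mset (remove1 y ys))"
  proof -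
    have "mset (remove1 y ys) = mset ys - {#y#}" by simp
    then have "image_mset (\<lambda>x. x * x) (mset (remove1 y ys)) = image_mset (\<lambda>x. x * x) (mset ys) - {#y*y#}"
      using y(1) by (simp add: image_mset_Diff)
    also have "\<dots> = image_mset (\<lambda>x. x * x) (mset (x # xs)) - {#x*x#}" using Cons.prems y(2) by simp
    also have "\<dots> = image_mset (\<lambda>x. x * x) (mset xs)" by simp
    finally show ?thesis by simp
  qed
  from Cons.IH[OF this] obtain xs' ys' where h: "mset xs' = mset xs" "mset ys' = mset (remove1 y ys)"
      "list_all2 (\<lambda>a b. b = a \<or> b = - a) xs' ys'" unfolding equal_up_to_sign_def by blast
  show ?case unfolding equal_up_to_sign_def
    apply (rule exI[of _ "x # xs'"], rule exI[of _ "y # ys'"])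
    using h y yx by auto
qed


lemma group_enum_bij:
  assumes "finite (carrier G)"
  shows "bij_betw (group_enum G) {..<card (carrier G)} (carrier G)"
proof -
  obtain h where "bij_betw h {0..<card (carrier G)} (carrier G)" using ex_bij_betw_nat_finite[OF assms] by blast
  then have "\<exists>e. bij_betw e {..<card (carrier G)} (carrier G)" by (auto simp: atLeast0LessThan)
  then show ?thesis unfolding group_enum_def by (rule someI_ex)
qed

lemma cayley_sq_entry:
  fixes G :: "('a, 'b) monoid_scheme" (structure)
  assumes grp: "group G" and fin: "finite (carrier G)" and T: "T \<subseteq> carrier G"
    and tau: "\<And>x. x \<in> carrier G \<Longrightarrow> \<tau> x \<in> carrier G"
    and i: "i < card (carrier G)" and j: "j < card (carrier G)"
  shows "(cayley_adj_matrix G T \<tau> * cayley_adj_matrix G T \<tau>) $$ (i, j)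
     = of_nat (\<Sum>t\<in>T. card {u \<in> T. \<tau> (\<tau> (group_enum G i \<otimes>\<^bsub>G\<^esub> t) \<otimes>\<^bsub>G\<^esub> u) = group_enum G j})"
proof -
  interpret group G by fact
  define N where "N = card (carrier G)"
  define e where "e = group_enum G"
  have eb: "bij_betw e {..<N} (carrier G)" unfolding e_def N_def by (rule group_enum_bij[OF fin])
  have finT: "finite T" using T fin finite_subset by blast
  define g where "g z = card {u \<in> T. \<tau> (z \<otimes> u) = e j}" for z
  have "(cayley_adj_matrix G T \<tau> * cayley_adj_matrix G T \<tau>) $$ (i, j)
      = (\<Sum>l<N. of_nat (card {t \<in> T. \<tau> (e i \<otimes> t) = e l}) * of_nat (g (e l)))"
    using i j unfolding cayley_adj_matrix_def Let_def N_def[symmetric] e_def[symmetric] g_def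
    by (simp add: scalar_prod_def atLeast0LessThan)
  also have "\<dots> = (\<Sum>z\<in>carrier G. of_nat (card {t \<in> T. \<tau> (e i \<otimes> t) = z}) * of_nat (g z))"
    by (rule sum.reindex_bij_betw[OF eb, where g = "\<lambda>z. of_nat (card {t \<in> T. \<tau> (e i \<otimes> t) = z}) * of_nat (g z)"])
  also have "\<dots> = (\<Sum>t\<in>T. (of_nat (g (\<tau> (e i \<otimes> t))) :: complex))"
  proof (rule sum_fun_comp[symmetric, OF finT fin])
    have "e i \<in> carrier G" using eb i N_def by (auto simp: bij_betw_def)
    then show "(\<lambda>t. \<tau> (e i \<otimes> t)) ` T \<subseteq> carrier G" using T tau by auto
  qed
  also have "\<dots> = of_nat (\<Sum>t\<in>T. g (\<tau> (e i \<otimes> t)))" by simp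
  finally show ?thesis unfolding g_def e_def .
qed

lemma cayley_sq_eq:
  fixes G :: "('a, 'b) monoid_scheme" (structure)
  assumes grp: "group G" and fin: "finite (carrier G)" and T: "T \<subseteq> carrier G"
    and hom: "\<sigma> \<in> hom G G" and inv2: "\<And>x. x \<in> carrier G \<Longrightarrow> \<sigma> (\<sigma> x) = x"
    and Tinv: "\<And>t. t \<in> T \<Longrightarrow> \<sigma> t \<in> T"
  shows "cayley_adj_matrix G T \<sigma> * cayley_adj_matrix G T \<sigma> = cayley_adj_matrix G T id * cayley_adj_matrix G T id"
proof -
  interpret group G by fact
  define N where "N = card (carrier G)"
  define e where "e = group_enum G"
  have eb: "bij_betw e {..<N} (carrier G)" unfolding e_def N_def by (rule group_enum_bij[OF fin])
  have sc: "\<And>x. x \<in> carrier G \<Longrightarrow> \<sigma> x \<in> carrier G" using hom by (auto simp: hom_def)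
  have sm: "\<And>x y. x \<in> carrier G \<Longrightarrow> y \<in> carrier G \<Longrightarrow> \<sigma> (x \<otimes> y) = \<sigma> x \<otimes> \<sigma> y" using hom by (auto simp: hom_def)
  show ?thesis
  proof (rule eq_matI)
    fix i j assume i: "i < dim_row (cayley_adj_matrix G T id * cayley_adj_matrix G T id)"
      and j: "j < dim_col (cayley_adj_matrix G T id * cayley_adj_matrix G T id)"
    then have i: "i < N" and j: "j < N" by (auto simp: cayley_adj_matrix_def N_def Let_def)
    have ei: "e i \<in> carrier G" using eb i by (auto simp: bij_betw_def)
    have "(\<Sum>t\<in>T. card {u \<in> T. \<sigma> (\<sigma> (e i \<otimes> t) \<otimes> u) = e j})
        = (\<Sum>t\<in>T. card {u \<in> T. id (id (e i \<otimes> t) \<otimes> u) = e j})"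
    proof (rule sum.cong[OF refl])
      fix t assume t: "t \<in> T"
      have et: "e i \<otimes> t \<in> carrier G" using ei t T by auto
      have s1: "{u \<in> T. \<sigma> (\<sigma> (e i \<otimes> t) \<otimes> u) = e j} = {u \<in> T. (e i \<otimes> t) \<otimes> \<sigma> u = e j}"
        using et T sc sm inv2 by auto
      have s2: "card {u \<in> T. (e i \<otimes> t) \<otimes> \<sigma> u = e j} = card (\<sigma> ` {u \<in> T. (e i \<otimes> t) \<otimes> \<sigma> u = e j})"
        by (rule card_image[symmetric], rule inj_on_inverseI[where g = \<sigma>], use inv2 T in auto)
      have s3: "\<sigma> ` {u \<in> T. (e i \<otimes> t) \<otimes> \<sigma> u = e j} = {u \<in> T. id (id (e i \<otimes> t) \<otimes> u) = e j}"
      proof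
        show "\<sigma> ` {u \<in> T. e i \<otimes> t \<otimes> \<sigma> u = e j} \<subseteq> {u \<in> T. id (id (e i \<otimes> t) \<otimes> u) = e j}"
          using Tinv by auto
        show "{u \<in> T. id (id (e i \<otimes> t) \<otimes> u) = e j} \<subseteq> \<sigma> ` {u \<in> T. e i \<otimes> t \<otimes> \<sigma> u = e j}"
        proof
          fix u assume u: "u \<in> {u \<in> T. id (id (e i \<otimes> t) \<otimes> u) = e j}"
          then have "\<sigma> u \<in> T" "\<sigma> (\<sigma> u) = u" using Tinv inv2 T by auto
          then show "u \<in> \<sigma> ` {u \<in> T. e i \<otimes> t \<otimes> \<sigma> u = e j}" using u by (auto intro!: image_eqI[of u \<sigma> "\<sigma> u"])
        qed
      qed
      show "card {u \<in> T. \<sigma> (\<sigma> (e i \<otimes> t) \<otimes> u) = e j} = card {u \<in> T. id (id (e i \<otimes> t) \<otimes> u) = e j}"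
        using s1 s2 s3 by simp
    qed
    then show "(cayley_adj_matrix G T \<sigma> * cayley_adj_matrix G T \<sigma>) $$ (i, j) =
         (cayley_adj_matrix G T id * cayley_adj_matrix G T id) $$ (i, j)"
      using cayley_sq_entry[OF grp fin T, where \<tau>=\<sigma> and i=i and j=j] cayley_sq_entry[OF grp fin T, where \<tau>=id and i=i and j=j] sc i j
      unfolding N_def e_def by simp
  qed (auto simp: cayley_adj_matrix_def Let_def)
qed

lemma cayley_mat_carrier: "cayley_adj_matrix G T \<tau> \<in> carrier_mat (card (carrier G)) (card (carrier G))"
  by (simp add: cayley_adj_matrix_def Let_def)

lemma part2:
  assumes grp: "group G" and fin: "finite (carrier G)" and T: "T \<subseteq> carrier G"
    and hom1: "\<sigma>1 \<in> hom G G" and inv1: "\<And>x. x \<in> carrier G \<Longrightarrow> \<sigma>1 (\<sigma>1 x) = x"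
    and T1: "\<And>t. t \<in> T \<Longrightarrow> \<sigma>1 t \<in> T"
    and hom2: "\<sigma>2 \<in> hom G G" and inv2: "\<And>x. x \<in> carrier G \<Longrightarrow> \<sigma>2 (\<sigma>2 x) = x"
    and T2: "\<And>t. t \<in> T \<Longrightarrow> \<sigma>2 t \<in> T"
  shows "equal_up_to_sign (eigenvalues_mset (cayley_adj_matrix G T \<sigma>1)) (eigenvalues_mset (cayley_adj_matrix G T \<sigma>2))"
proof -
  have e: "cayley_adj_matrix G T \<sigma>1 * cayley_adj_matrix G T \<sigma>1 = cayley_adj_matrix G T \<sigma>2 * cayley_adj_matrix G T \<sigma>2"
    using cayley_sq_eq[OF grp fin T hom1 inv1 T1] cayley_sq_eq[OF grp fin T hom2 inv2 T2] by simp
  obtain xs where xs: "eigenvalues_mset (cayley_adj_matrix G T \<sigma>1) = mset xs" by (metis ex_mset)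
  obtain ys where ys: "eigenvalues_mset (cayley_adj_matrix G T \<sigma>2) = mset ys" by (metis ex_mset)
  have "image_mset (\<lambda>x. x * x) (mset xs) = image_mset (\<lambda>x. x * x) (mset ys)"
    using eig_sq[OF cayley_mat_carrier, of G T \<sigma>1] eig_sq[OF cayley_mat_carrier, of G T \<sigma>2] e xs ys by simp
  then show ?thesis using sq_sign xs ys by simp
qed


lemma fold_comp_snoc: "fold (\<lambda>i f. s i \<circ> f) (xs @ [a]) g = s a \<circ> fold (\<lambda>i f. s i \<circ> f) xs g"
  by simp

locale twist_setup =
  fixes G :: "('a, 'b) monoid_scheme" (structure)
    and s :: "nat \<Rightarrow> 'a \<Rightarrow> 'a" and k :: nat
  assumes grp: "group G"
    and aut: "\<And>i. i \<in> {1..k} \<Longrightarrow> s i \<in> iso G G"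
    and ord2: "\<And>i x. i \<in> {1..k} \<Longrightarrow> x \<in> carrier G \<Longrightarrow> s i (s i x) = x"
    and comm: "\<And>i j x. i \<in> {1..k} \<Longrightarrow> j \<in> {1..k} \<Longrightarrow> x \<in> carrier G \<Longrightarrow> s i (s j x) = s j (s i x)"
begin

interpretation group G by (rule grp)

lemma s_car: "i \<in> {1..k} \<Longrightarrow> x \<in> carrier G \<Longrightarrow> s i x \<in> carrier G"
  using aut[of i] by (auto simp: iso_def hom_def)

lemma s_mult: "i \<in> {1..k} \<Longrightarrow> x \<in> carrier G \<Longrightarrow> y \<in> carrier G \<Longrightarrow> s i (x \<otimes> y) = s i x \<otimes> s i y"
  using aut[of i] by (auto simp: iso_def hom_def)

lemma s_hom: "i \<in> {1..k} \<Longrightarrow> s i \<in> hom G G"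
  using aut[of i] by (auto simp: iso_def)

lemma s_inv: "i \<in> {1..k} \<Longrightarrow> x \<in> carrier G \<Longrightarrow> s i (inv x) = inv (s i x)"
  using group_hom.hom_inv[of G G "s i" x] s_hom grp by (auto simp: group_hom_def group_hom_axioms_def)

definition s' :: "nat \<Rightarrow> 'a \<Rightarrow> 'a" where
  "s' i x = (if x \<in> carrier G then s i x else x)"

definition F :: "nat list \<Rightarrow> 'a \<Rightarrow> 'a" where
  "F L = fold (\<lambda>i f. s i \<circ> f) L id"

definition F' :: "nat list \<Rightarrow> 'a \<Rightarrow> 'a" where
  "F' L = fold (\<lambda>i f. s' i \<circ> f) L id"

lemma F_props:
  assumes "set L \<subseteq> {1..k}" "x \<in> carrier G"
  shows "F L x = F' L x \<and> F L x \<in> carrier G"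
  using assms
proof (induction L rule: rev_induct)
  case Nil then show ?case by (simp add: F_def F'_def)
next
  case (snoc a L)
  then have a: "a \<in> {1..k}" and IH: "F L x = F' L x" "F L x \<in> carrier G" by auto
  have "F (L @ [a]) x = s a (F L x)" by (simp add: F_def)
  moreover have "F' (L @ [a]) x = s' a (F' L x)" by (simp add: F'_def)
  ultimately show ?case using IH a s_car by (simp add: s'_def)
qed

lemma F_car: "set L \<subseteq> {1..k} \<Longrightarrow> x \<in> carrier G \<Longrightarrow> F L x \<in> carrier G"
  using F_props by blast

lemma F_eq: "set L \<subseteq> {1..k} \<Longrightarrow> x \<in> carrier G \<Longrightarrow> F' L x = F L x"
  using F_props by metis

lemma F_mult:
  assumes "set L \<subseteq> {1..k}" "x \<in> carrier G" "y \<in> carrier G"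
  shows "F L (x \<otimes> y) = F L x \<otimes> F L y"
  using assms
proof (induction L rule: rev_induct)
  case Nil then show ?case by (simp add: F_def)
next
  case (snoc a L)
  then have a: "a \<in> {1..k}" and IH: "F L (x \<otimes> y) = F L x \<otimes> F L y" and sL: "set L \<subseteq> {1..k}" by auto
  have "F (L @ [a]) (x \<otimes> y) = s a (F L (x \<otimes> y))" by (simp add: F_def)
  also have "\<dots> = s a (F L x) \<otimes> s a (F L y)"
  proof -
    have "F L x \<in> carrier G" "F L y \<in> carrier G" using F_car[OF sL] snoc.prems by auto
    then show ?thesis using IH s_mult[OF a] by simp
  qed
  finally show ?case by (simp add: F_def)
qed

lemma F_inv:
  assumes "set L \<subseteq> {1..k}" "x \<in> carrier G"
  shows "F L (inv x) = inv (F L x)"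
  using assms
proof (induction L rule: rev_induct)
  case Nil then show ?case by (simp add: F_def)
next
  case (snoc a L)
  then have a: "a \<in> {1..k}" and IH: "F L (inv x) = inv (F L x)" and sL: "set L \<subseteq> {1..k}" by auto
  have "F (L @ [a]) (inv x) = s a (F L (inv x))" by (simp add: F_def)
  also have "\<dots> = inv (s a (F L x))"
  proof -
    have "F L x \<in> carrier G" using F_car[OF sL] snoc.prems by auto
    then show ?thesis using IH s_inv[OF a] by simp
  qed
  finally show ?case by (simp add: F_def)
qed

lemma s'_comm: "i \<in> {1..k} \<Longrightarrow> j \<in> {1..k} \<Longrightarrow> s' i \<circ> s' j = s' j \<circ> s' i"
  by (auto simp: s'_def fun_eq_iff s_car comm)

lemma s'_inv: "i \<in> {1..k} \<Longrightarrow> s' i \<circ> s' i = id"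
  by (auto simp: s'_def fun_eq_iff s_car ord2)

lemma F'_perm:
  assumes "set L \<subseteq> {1..k}" "mset L = mset M"
  shows "F' L = F' M"
proof -
  have "fold (\<lambda>i f. s' i \<circ> f) L = fold (\<lambda>i f. s' i \<circ> f) M"
  proof (rule fold_multiset_equiv)
    fix x y assume "x \<in> set L" "y \<in> set L"
    then have "x \<in> {1..k}" "y \<in> {1..k}" using assms by auto
    then show "(\<lambda>f. s' x \<circ> f) \<circ> (\<lambda>f. s' y \<circ> f) = (\<lambda>f. s' y \<circ> f) \<circ> (\<lambda>f. s' x \<circ> f)"
      using s'_comm by (auto simp: fun_eq_iff comp_def) (metis comp_apply)?
  qed (rule assms(2))
  then show ?thesis unfolding F'_def by metis
qed

lemma comp_over_F: "comp_over s I = F (sorted_list_of_set I)"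
  by (simp add: comp_over_def F_def)

lemma comp_over_car:
  assumes "I \<subseteq> {1..k}" "x \<in> carrier G" shows "comp_over s I x \<in> carrier G"
proof -
  have "finite I" using assms(1) finite_subset by blast
  then show ?thesis using F_car[of "sorted_list_of_set I" x] assms by (auto simp: comp_over_F)
qed

lemma comp_over_mult:
  assumes "I \<subseteq> {1..k}" "x \<in> carrier G" "y \<in> carrier G"
  shows "comp_over s I (x \<otimes> y) = comp_over s I x \<otimes> comp_over s I y"
proof -
  have "finite I" using assms(1) finite_subset by blast
  then show ?thesis using F_mult[of "sorted_list_of_set I" x y] assms by (auto simp: comp_over_F)
qed

lemma comp_over_inv:
  assumes "I \<subseteq> {1..k}" "x \<in> carrier G"
  shows "comp_over s I (inv x) = inv (comp_over s I x)"
proof -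
  have "finite I" using assms(1) finite_subset by blast
  then show ?thesis using F_inv[of "sorted_list_of_set I" x] assms by (auto simp: comp_over_F)
qed

lemma comp_over_s:
  assumes I: "I \<subseteq> {1..k}" and i: "i \<in> {1..k}" and x: "x \<in> carrier G"
  shows "\<exists>J \<subseteq> {1..k}. s i (comp_over s I x) = comp_over s J x"
proof -
  have fI: "finite I" using I finite_subset by blast
  let ?L = "sorted_list_of_set I"
  have sL: "set ?L \<subseteq> {1..k}" using fI I by auto
  have "s i (comp_over s I x) = F (?L @ [i]) x" by (simp add: comp_over_F F_def)
  also have "\<dots> = F' (?L @ [i]) x" using F_eq[of "?L @ [i]" x] sL i x by auto
  finally have e1: "s i (comp_over s I x) = F' (?L @ [i]) x" .
  show ?thesis
  proof (cases "i \<in> I")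
    case False
    let ?J = "insert i I"
    have fJ: "finite ?J" using fI by auto
    have "mset (?L @ [i]) = mset (sorted_list_of_set ?J)"
      using False fI by (metis mset_sorted_list_of_multiset sorted_list_of_mset_set mset_set.insert mset_append mset.simps add_mset_add_single)
    then have "F' (?L @ [i]) = F' (sorted_list_of_set ?J)" using sL i by (intro F'_perm) auto
    moreover have "F' (sorted_list_of_set ?J) x = F (sorted_list_of_set ?J) x"
    proof -
      have "set (sorted_list_of_set ?J) \<subseteq> {1..k}" using fJ I i by (simp only: set_sorted_list_of_set) auto
      then show ?thesis using F_eq x by blast
    qed
    ultimately show ?thesis using e1 I i by (intro exI[of _ ?J]) (auto simp: comp_over_F)
  next
    case True
    let ?J = "I - {i}"
    have fJ: "finite ?J" using fI by auto
    have "mset (?L @ [i]) = mset (i # i # sorted_list_of_set ?J)"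
      using True fI by (metis mset_sorted_list_of_multiset sorted_list_of_mset_set mset_set.remove mset_append mset.simps add_mset_add_single union_commute)
    then have "F' (?L @ [i]) = F' (i # i # sorted_list_of_set ?J)" using sL i by (intro F'_perm) auto
    also have "\<dots> = F' (sorted_list_of_set ?J)"
      unfolding F'_def using s'_inv[OF i] by (simp add: comp_assoc)
    finally have "F' (?L @ [i]) x = F' (sorted_list_of_set ?J) x" by simp
    moreover have "set (sorted_list_of_set ?J) \<subseteq> {1..k}" using fJ I i by (simp only: set_sorted_list_of_set) auto
    ultimately have "F' (?L @ [i]) x = F (sorted_list_of_set ?J) x" using F_eq x by metis
    then show ?thesis using e1 I i by (intro exI[of _ ?J]) (auto simp: comp_over_F)
  qed
qed

end


locale exp_setup =
  fixes G :: "('a, 'b) monoid_scheme" (structure)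
    and S T :: "'a set" and \<sigma> :: "'a \<Rightarrow> 'a" and d :: nat and \<epsilon> :: real
  assumes grp: "group G"
    and fin: "finite (carrier G)"
    and S_sub: "S \<subseteq> carrier G"
    and S_sym: "\<And>s. s \<in> S \<Longrightarrow> inv s \<in> S"
    and S_card: "card S \<le> d"
    and epos: "\<epsilon> > 0"
    and expand: "\<And>X. X \<subseteq> carrier G \<Longrightarrow> real (card X) \<le> real (card (carrier G)) / 2 \<Longrightarrow>
        \<epsilon> * real (card X) \<le> real (card {y \<in> carrier G - X. \<exists>x\<in>X. \<exists>s\<in>S. y = x \<otimes> s})"
    and \<sigma>_hom: "\<sigma> \<in> hom G G"
    and \<sigma>_inv: "\<And>x. x \<in> carrier G \<Longrightarrow> \<sigma> (\<sigma> x) = x"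
    and T_sub: "T \<subseteq> carrier G"
    and ST: "S \<subseteq> T"
    and \<sigma>ST: "\<And>s. s \<in> S \<Longrightarrow> \<sigma> s \<in> T"
begin

interpretation group G by (rule grp)

lemma \<sigma>_car: "x \<in> carrier G \<Longrightarrow> \<sigma> x \<in> carrier G"
  using \<sigma>_hom by (auto simp: hom_def)

lemma \<sigma>_mult: "x \<in> carrier G \<Longrightarrow> y \<in> carrier G \<Longrightarrow> \<sigma> (x \<otimes> y) = \<sigma> x \<otimes> \<sigma> y"
  using \<sigma>_hom by (auto simp: hom_def)

lemma \<sigma>_inj: "inj_on \<sigma> (carrier G)"
  by (rule inj_on_inverseI[where g = \<sigma>]) (use \<sigma>_inv in auto)

lemma card_\<sigma>: "X \<subseteq> carrier G \<Longrightarrow> card (\<sigma> ` X) = card X"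
  using \<sigma>_inj by (meson card_image inj_on_subset)

lemma finX: "X \<subseteq> carrier G \<Longrightarrow> finite X"
  using fin finite_subset by blast

lemma NC:
  assumes X: "X \<subseteq> carrier G" and Fs: "F \<subseteq> carrier G"
    and cl: "\<And>x s. x \<in> X \<Longrightarrow> s \<in> S \<Longrightarrow> x \<otimes> s \<in> X \<union> F"
  shows "\<epsilon> * card X \<le> card F \<or> \<epsilon> * card (carrier G - X) \<le> d * card F"
proof (cases "real (card X) \<le> real (card (carrier G)) / 2")
  case True
  have "{y \<in> carrier G - X. \<exists>x\<in>X. \<exists>s\<in>S. y = x \<otimes> s} \<subseteq> F" using cl by auto
  then have "card {y \<in> carrier G - X. \<exists>x\<in>X. \<exists>s\<in>S. y = x \<otimes> s} \<le> card F"
    using finX[OF Fs] by (rule card_mono[rotated])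
  then show ?thesis using expand[OF X True] by linarith
next
  case False
  let ?Y = "carrier G - X"
  have cY: "card ?Y = card (carrier G) - card X" using X fin by (simp add: card_Diff_subset finX)
  have cX: "card X \<le> card (carrier G)" using X fin card_mono by blast
  have Yh: "real (card ?Y) \<le> real (card (carrier G)) / 2" using False cY cX by auto
  have sub: "{y \<in> carrier G - ?Y. \<exists>x\<in>?Y. \<exists>s\<in>S. y = x \<otimes> s} \<subseteq> (\<lambda>(f, s). f \<otimes> s) ` (F \<times> S)"
  proof
    fix y' assume "y' \<in> {y \<in> carrier G - ?Y. \<exists>x\<in>?Y. \<exists>s\<in>S. y = x \<otimes> s}"
    then obtain y s where y': "y' \<in> X" and y: "y \<in> carrier G" "y \<notin> X" and s: "s \<in> S" and e: "y' = y \<otimes> s" by auto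
    have sc: "s \<in> carrier G" using s S_sub by auto
    have "y = y' \<otimes> inv s" using e y sc by (simp add: m_assoc)
    then have "y \<in> X \<union> F" using cl[OF y' S_sym[OF s]] by simp
    then have "y \<in> F" using y by auto
    then show "y' \<in> (\<lambda>(f, s). f \<otimes> s) ` (F \<times> S)" using e s by auto
  qed
  have "card {y \<in> carrier G - ?Y. \<exists>x\<in>?Y. \<exists>s\<in>S. y = x \<otimes> s} \<le> card ((\<lambda>(f, s). f \<otimes> s) ` (F \<times> S))"
    by (rule card_mono[OF _ sub]) (use finX[OF Fs] finX[OF S_sub] in auto)
  also have "\<dots> \<le> card (F \<times> S)" by (rule card_image_le) (use finX[OF Fs] finX[OF S_sub] in auto)
  also have "\<dots> = card F * card S" by (simp add: card_cartesian_product)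
  also have "\<dots> \<le> card F * d" using S_card by simp
  finally have "card {y \<in> carrier G - ?Y. \<exists>x\<in>?Y. \<exists>s\<in>S. y = x \<otimes> s} \<le> d * card F"
    by (simp add: mult.commute)
  then have "real (card {y \<in> carrier G - ?Y. \<exists>x\<in>?Y. \<exists>s\<in>S. y = x \<otimes> s}) \<le> real d * card F"
    by (simp only: of_nat_mult[symmetric] of_nat_le_iff)
  with expand[OF _ Yh] show ?thesis by auto
qed

end


locale exp_A = exp_setup +
  fixes A :: "'a set"
  assumes A_sub: "A \<subseteq> carrier G"
    and A_half: "real (card A) \<le> real (card (carrier G)) / 2"
begin

interpretation group G by (rule grp)

definition "E = {y \<in> carrier G - A. \<exists>a\<in>A. \<exists>t\<in>T. y = \<sigma> (a \<otimes> t)}"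
definition "B = \<sigma> ` A"
definition "E2 = \<sigma> ` E"
definition lt :: "'a \<Rightarrow> 'a set \<Rightarrow> 'a set" where "lt g Y = (\<lambda>x. g \<otimes> x) ` Y"
definition "m g = card (A \<inter> lt g A)"
definition "X g = (A \<inter> lt g A) \<union> (B \<inter> lt g B)"

lemma E_sub: "E \<subseteq> carrier G" by (auto simp: E_def)
lemma B_sub: "B \<subseteq> carrier G" using A_sub \<sigma>_car by (auto simp: B_def)
lemma E2_sub: "E2 \<subseteq> carrier G" using E_sub \<sigma>_car by (auto simp: E2_def)
lemma card_B: "card B = card A" using card_\<sigma>[OF A_sub] by (simp add: B_def)
lemma card_E2: "card E2 = card E" using card_\<sigma>[OF E_sub] by (simp add: E2_def)
lemma finA: "finite A" using finX[OF A_sub] .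
lemma finB: "finite B" using finX[OF B_sub] .
lemma finE: "finite E" using finX[OF E_sub] .
lemma finE2: "finite E2" using finX[OF E2_sub] .

lemma clA: assumes x: "x \<in> A" and s: "s \<in> S" shows "x \<otimes> s \<in> B \<union> E2"
proof -
  have xs: "x \<otimes> s \<in> carrier G" using x s A_sub S_sub by auto
  have y: "\<sigma> (x \<otimes> s) \<in> A \<union> E" using x s ST \<sigma>_car[OF xs] by (auto simp: E_def)
  have "x \<otimes> s = \<sigma> (\<sigma> (x \<otimes> s))" using \<sigma>_inv[OF xs] by simp
  then show ?thesis using y by (auto simp: B_def E2_def)
qed

lemma clB: assumes x: "x \<in> B" and s: "s \<in> S" shows "x \<otimes> s \<in> A \<union> E"
proof -
  obtain a where a: "a \<in> A" and xa: "x = \<sigma> a" using x by (auto simp: B_def)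
  have ac: "a \<in> carrier G" and sc: "s \<in> carrier G" using a s A_sub S_sub by auto
  have "x \<otimes> s = \<sigma> (a \<otimes> \<sigma> s)" using \<sigma>_mult[OF ac \<sigma>_car[OF sc]] \<sigma>_inv[OF sc] xa by simp
  moreover have "\<sigma> (a \<otimes> \<sigma> s) \<in> carrier G" using ac sc \<sigma>_car by auto
  ultimately show ?thesis using a \<sigma>ST[OF s] by (auto simp: E_def)
qed

lemma card_EE2: "card (E \<union> E2) \<le> 2 * card E"
  using card_Un_le[of E E2] card_E2 by simp

lemma lt_sub: "g \<in> carrier G \<Longrightarrow> Y \<subseteq> carrier G \<Longrightarrow> lt g Y \<subseteq> carrier G"
  by (auto simp: lt_def)

lemma lt_inj: "g \<in> carrier G \<Longrightarrow> inj_on (\<lambda>x. g \<otimes> x) (carrier G)"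
  by (auto simp: inj_on_def)

lemma card_lt: "g \<in> carrier G \<Longrightarrow> Y \<subseteq> carrier G \<Longrightarrow> card (lt g Y) = card Y"
  unfolding lt_def by (meson card_image inj_on_subset lt_inj)

lemma lt_mult: "g \<in> carrier G \<Longrightarrow> h \<in> carrier G \<Longrightarrow> Y \<subseteq> carrier G \<Longrightarrow> lt g (lt h Y) = lt (g \<otimes> h) Y"
proof -
  assume g: "g \<in> carrier G" and h: "h \<in> carrier G" and Y: "Y \<subseteq> carrier G"
  have "lt g (lt h Y) = (\<lambda>x. g \<otimes> (h \<otimes> x)) ` Y" unfolding lt_def image_image ..
  also have "\<dots> = (\<lambda>x. (g \<otimes> h) \<otimes> x) ` Y" using g h Y by (intro image_cong) (auto simp: m_assoc)
  finally show ?thesis by (simp add: lt_def)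
qed

lemma lt_diff: "g \<in> carrier G \<Longrightarrow> Y \<subseteq> carrier G \<Longrightarrow> Z \<subseteq> carrier G \<Longrightarrow> lt g Y - lt g Z = lt g (Y - Z)"
  unfolding lt_def using inj_on_image_set_diff[OF lt_inj, of g Y Z] by auto

lemma X_sub: "g \<in> carrier G \<Longrightarrow> X g \<subseteq> carrier G"
  using A_sub B_sub by (auto simp: X_def)

lemma NC_X:
  assumes g: "g \<in> carrier G"
  shows "\<epsilon> * card (X g) \<le> 4 * card E \<or> \<epsilon> * card (carrier G - X g) \<le> d * (4 * card E)"
proof -
  let ?F = "E \<union> E2 \<union> lt g E \<union> lt g E2"
  have Fs: "?F \<subseteq> carrier G" using E_sub E2_sub lt_sub[OF g] by auto
  have cF: "card ?F \<le> 4 * card E"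
  proof -
    have "card ?F \<le> card (E \<union> E2 \<union> lt g E) + card (lt g E2)" by (rule card_Un_le)
    also have "\<dots> \<le> card (E \<union> E2) + card (lt g E) + card (lt g E2)" using card_Un_le[of "E \<union> E2" "lt g E"] by simp
    also have "\<dots> \<le> 4 * card E" using card_EE2 card_lt[OF g E_sub] card_lt[OF g E2_sub] card_E2 by simp
    finally show ?thesis .
  qed
  have cl: "x \<otimes> s \<in> X g \<union> ?F" if x: "x \<in> X g" and s: "s \<in> S" for x s
  proof -
    have sc: "s \<in> carrier G" using s S_sub by auto
    show ?thesis
    proof (cases "x \<in> A \<inter> lt g A")
      case True
      then obtain a0 where a0: "a0 \<in> A" "x = g \<otimes> a0" by (auto simp: lt_def)
      have a0c: "a0 \<in> carrier G" using a0 A_sub by auto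
      have "x \<otimes> s = g \<otimes> (a0 \<otimes> s)" using a0 a0c g sc by (simp add: m_assoc)
      then have "x \<otimes> s \<in> lt g B \<union> lt g E2" using clA[OF a0(1) s] by (auto simp: lt_def)
      moreover have "x \<otimes> s \<in> B \<union> E2" using clA[OF _ s] True by auto
      ultimately show ?thesis by (auto simp: X_def)
    next
      case False
      then have xB: "x \<in> B \<inter> lt g B" using x by (auto simp: X_def)
      then obtain a0 where a0: "a0 \<in> B" "x = g \<otimes> a0" by (auto simp: lt_def)
      have a0c: "a0 \<in> carrier G" using a0 B_sub by auto
      have "x \<otimes> s = g \<otimes> (a0 \<otimes> s)" using a0 a0c g sc by (simp add: m_assoc)
      then have "x \<otimes> s \<in> lt g A \<union> lt g E" using clB[OF a0(1) s] by (auto simp: lt_def)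
      moreover have "x \<otimes> s \<in> A \<union> E" using clB[OF _ s] xB by auto
      ultimately show ?thesis by (auto simp: X_def)
    qed
  qed
  from NC[OF X_sub[OF g] Fs cl] cF show ?thesis
    by (smt (verit, ccfv_SIG) epos mult_left_mono of_nat_0_le_iff of_nat_le_iff of_nat_mult)
qed

lemma m_le_X: "g \<in> carrier G \<Longrightarrow> m g \<le> card (X g)"
  unfolding m_def X_def by (rule card_mono) (use finX[OF X_sub] X_def in auto)

lemma m_le_A: "m g \<le> card A"
  unfolding m_def by (rule card_mono[OF finA]) auto

lemma A_diff_card: "g \<in> carrier G \<Longrightarrow> card (A - lt g A) = card A - m g"
  unfolding m_def by (simp add: card_Diff_subset_Int finA)

lemma big_m:
  assumes g: "g \<in> carrier G"
  shows "card A - m g \<le> card (carrier G - X g) + card (A \<inter> B)"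
proof -
  have "A - lt g A \<subseteq> (carrier G - X g) \<union> (A \<inter> B)" using A_sub by (auto simp: X_def)
  then have "card (A - lt g A) \<le> card ((carrier G - X g) \<union> (A \<inter> B))"
    by (rule card_mono[rotated]) (use fin finA in auto)
  also have "\<dots> \<le> card (carrier G - X g) + card (A \<inter> B)" by (rule card_Un_le)
  finally show ?thesis using A_diff_card[OF g] by simp
qed

lemma X_\<sigma>:
  assumes g: "g \<in> carrier G"
  shows "X (\<sigma> g) = \<sigma> ` X g"
proof -
  have inj: "inj_on \<sigma> (carrier G)" by (rule \<sigma>_inj)
  have ltA: "lt g A \<subseteq> carrier G" and ltB: "lt g B \<subseteq> carrier G" using lt_sub[OF g] A_sub B_sub by auto
  have BA: "\<sigma> ` B = A" using A_sub \<sigma>_inv by (force simp: B_def image_image)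
  have l1: "\<sigma> ` lt g A = lt (\<sigma> g) B"
    using g A_sub \<sigma>_mult by (force simp: lt_def B_def image_image)
  have l2: "\<sigma> ` lt g B = lt (\<sigma> g) A"
  proof -
    have "\<sigma> ` lt g B = (\<lambda>a. \<sigma> g \<otimes> a) ` A" unfolding lt_def B_def image_image
      using g A_sub \<sigma>_mult \<sigma>_car \<sigma>_inv by (intro image_cong) auto
    then show ?thesis by (simp add: lt_def)
  qed
  have "\<sigma> ` X g = \<sigma> ` (A \<inter> lt g A) \<union> \<sigma> ` (B \<inter> lt g B)" by (simp add: X_def image_Un)
  also have "\<sigma> ` (A \<inter> lt g A) = \<sigma> ` A \<inter> \<sigma> ` lt g A" by (rule inj_on_image_Int[OF inj A_sub ltA])
  also have "\<sigma> ` (B \<inter> lt g B) = \<sigma> ` B \<inter> \<sigma> ` lt g B" by (rule inj_on_image_Int[OF inj B_sub ltB])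
  finally show ?thesis using l1 l2 BA by (auto simp: X_def B_def)
qed

lemma card_X_\<sigma>: "g \<in> carrier G \<Longrightarrow> card (X (\<sigma> g)) = card (X g)"
  using X_\<sigma> card_\<sigma> X_sub by simp

lemma card_coX_\<sigma>: "g \<in> carrier G \<Longrightarrow> card (carrier G - X (\<sigma> g)) = card (carrier G - X g)"
  using card_X_\<sigma> X_sub \<sigma>_car fin by (simp add: card_Diff_subset finX)

end


locale exp_contra = exp_A +
  assumes H: "100 * (real d + 1) * real (card {y \<in> carrier G - A. \<exists>a\<in>A. \<exists>t\<in>T. y = \<sigma> (a \<otimes> t)}) < \<epsilon> * real (card A)"
begin

interpretation group G by (rule grp)

lemma H': "100 * (real d + 1) * real (card E) < \<epsilon> * real (card A)"
  using H by (simp add: E_def)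

lemma iAB: "\<epsilon> * card (A \<inter> B) \<le> 2 * card E"
proof -
  have s: "A \<inter> B \<subseteq> carrier G" using A_sub by auto
  have F: "E \<union> E2 \<subseteq> carrier G" using E_sub E2_sub by auto
  have cl: "x \<otimes> s \<in> (A \<inter> B) \<union> (E \<union> E2)" if "x \<in> A \<inter> B" "s \<in> S" for x s
    using clA[of x s] clB[of x s] that by auto
  from NC[OF s F cl] have "\<epsilon> * card (A \<inter> B) \<le> card (E \<union> E2) \<or> \<epsilon> * card (carrier G - A \<inter> B) \<le> d * card (E \<union> E2)" .
  moreover have "real (card (E \<union> E2)) \<le> 2 * card E" using card_EE2 by linarith
  moreover have "card (carrier G - A \<inter> B) \<ge> card A"
  proof -
    have "card (carrier G - A \<inter> B) = card (carrier G) - card (A \<inter> B)" using s fin by (simp add: card_Diff_subset finX)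
    moreover have "card (A \<inter> B) \<le> card A" by (rule card_mono[OF finA]) auto
    ultimately show ?thesis using A_half by linarith
  qed
  moreover have "\<epsilon> * card A \<le> \<epsilon> * card (carrier G - A \<inter> B)" using epos calculation(3) by simp
  moreover have "real d * card (E \<union> E2) \<le> real d * (2 * card E)" using calculation(2) by (simp add: mult_left_mono)
  moreover have "real d * (2 * card E) < \<epsilon> * card A"
  proof -
    have "0 \<le> real d * card E" by simp
    moreover have "100 * (real d + 1) * card E = 100 * (real d * card E) + 100 * card E" by (simp add: algebra_simps)
    moreover have "real d * (2 * card E) = 2 * (real d * card E)" by simp
    ultimately show ?thesis using H' by linarith
  qed
  ultimately show ?thesis by (simp only: of_nat_mult of_nat_numeral) linarith
qed

abbreviation "ra \<equiv> real (card A)"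
abbreviation "re \<equiv> real (card E)"
abbreviation "rD \<equiv> real d"
abbreviation "rN \<equiv> real (card (carrier G))"

lemma H2: "100 * (rD * re) + 100 * re < \<epsilon> * ra"
proof -
  have "100 * (real d + 1) * card E = 100 * (real d * card E) + 100 * card E" by (simp add: algebra_simps)
  then show ?thesis using H' by linarith
qed

lemma De_nonneg: "0 \<le> rD * re" by simp
lemma e_nonneg: "0 \<le> re" by simp

lemma N2a: "2 * ra \<le> rN" using A_half by simp

lemma GN: "\<epsilon> * rN \<le> 2 * (\<epsilon> * ra) + 2 * (rD * re)"
proof -
  have s: "A \<union> B \<subseteq> carrier G" using A_sub B_sub by auto
  have F: "E \<union> E2 \<subseteq> carrier G" using E_sub E2_sub by auto
  have cl: "x \<otimes> s \<in> (A \<union> B) \<union> (E \<union> E2)" if "x \<in> A \<union> B" "s \<in> S" for x s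
    using clA[of x s] clB[of x s] that by auto
  from NC[OF s F cl] have nc: "\<epsilon> * card (A \<union> B) \<le> card (E \<union> E2) \<or> \<epsilon> * card (carrier G - (A \<union> B)) \<le> d * card (E \<union> E2)" .
  have cEE: "real (card (E \<union> E2)) \<le> 2 * re" using card_EE2 by linarith
  have cAB: "real (card (A \<union> B)) \<le> 2 * ra" using card_Un_le[of A B] card_B by linarith
  have cAB2: "ra \<le> real (card (A \<union> B))" using card_mono[of "A \<union> B" A] finA finB by auto
  have cco: "real (card (carrier G - (A \<union> B))) = rN - real (card (A \<union> B))"
    using s fin by (simp add: card_Diff_subset finX of_nat_diff card_mono)
  show ?thesis
  proof (cases "\<epsilon> * card (A \<union> B) \<le> card (E \<union> E2)")
    case True
    have "\<epsilon> * ra \<le> \<epsilon> * card (A \<union> B)" using cAB2 epos by simp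
    then have False using True cEE H2 De_nonneg by linarith
    then show ?thesis ..
  next
    case False
    then have h: "\<epsilon> * card (carrier G - (A \<union> B)) \<le> rD * card (E \<union> E2)" using nc by simp
    have "rD * card (E \<union> E2) \<le> rD * (2 * re)" using cEE by (simp add: mult_left_mono)
    moreover have "\<epsilon> * card (carrier G - (A \<union> B)) = \<epsilon> * rN - \<epsilon> * card (A \<union> B)" unfolding cco by (simp add: right_diff_distrib)
    moreover have "\<epsilon> * card (A \<union> B) \<le> \<epsilon> * (2 * ra)" using cAB epos by simp
    ultimately show ?thesis using h by (simp add: algebra_simps)
  qed
qed

definition "K = {g \<in> carrier G. 4 * re < \<epsilon> * real (m g)}"

lemma big_to_m:
  assumes g: "g \<in> carrier G" and big: "\<epsilon> * card (carrier G - X g) \<le> d * (4 * card E)"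
  shows "\<epsilon> * ra - 4 * (rD * re) - 2 * re \<le> \<epsilon> * real (m g)"
proof -
  have "card A - m g \<le> card (carrier G - X g) + card (A \<inter> B)" by (rule big_m[OF g])
  then have rl: "ra - real (m g) \<le> real (card (carrier G - X g)) + real (card (A \<inter> B))"
    using m_le_A[of g] by linarith
  then have "\<epsilon> * (ra - real (m g)) \<le> \<epsilon> * card (carrier G - X g) + \<epsilon> * card (A \<inter> B)"
  proof -
    have "\<epsilon> * (ra - real (m g)) \<le> \<epsilon> * (real (card (carrier G - X g)) + real (card (A \<inter> B)))"
      by (rule mult_left_mono) (use epos rl in auto)
    then show ?thesis by (simp add: distrib_left)
  qed
  moreover have "\<epsilon> * card (carrier G - X g) \<le> 4 * (rD * re)" using big by simp
  ultimately show ?thesis using iAB by (simp add: algebra_simps)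
qed

lemma K_big: "g \<in> K \<Longrightarrow> \<epsilon> * card (carrier G - X g) \<le> d * (4 * card E)"
proof -
  assume g: "g \<in> K"
  then have gc: "g \<in> carrier G" and mg: "4 * re < \<epsilon> * real (m g)" by (auto simp: K_def)
  have "\<epsilon> * real (m g) \<le> \<epsilon> * card (X g)" using m_le_X[OF gc] epos by simp
  then have "\<not> \<epsilon> * card (X g) \<le> 4 * card E" using mg by linarith
  then show ?thesis using NC_X[OF gc] by blast
qed

lemma K1: "g \<in> K \<Longrightarrow> \<epsilon> * ra - 4 * (rD * re) - 2 * re \<le> \<epsilon> * real (m g)"
proof -
  assume g: "g \<in> K"
  then have "g \<in> carrier G" by (simp add: K_def)
  then show ?thesis using big_to_m K_big[OF g] by blast
qed

lemma K2: "g \<in> carrier G \<Longrightarrow> g \<notin> K \<Longrightarrow> \<epsilon> * real (m g) \<le> 4 * re"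
  by (auto simp: K_def)

lemma K_sub: "K \<subseteq> carrier G" by (auto simp: K_def)

lemma K3: "g \<in> K \<Longrightarrow> \<sigma> g \<in> K"
proof -
  assume g: "g \<in> K"
  then have gc: "g \<in> carrier G" by (auto simp: K_def)
  have "\<epsilon> * card (carrier G - X (\<sigma> g)) \<le> d * (4 * card E)" using K_big[OF g] card_coX_\<sigma>[OF gc] by simp
  from big_to_m[OF \<sigma>_car[OF gc] this] have "\<epsilon> * ra - 4 * (rD * re) - 2 * re \<le> \<epsilon> * real (m (\<sigma> g))" .
  then have "4 * re < \<epsilon> * real (m (\<sigma> g))" using H2 De_nonneg e_nonneg by linarith
  then show ?thesis using \<sigma>_car[OF gc] by (simp add: K_def)
qed

lemma K4: assumes g: "g \<in> K" and h: "h \<in> K" shows "g \<otimes> h \<in> K"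
proof -
  have gc: "g \<in> carrier G" and hc: "h \<in> carrier G" using g h by (auto simp: K_def)
  have ghc: "g \<otimes> h \<in> carrier G" using gc hc by simp
  have ltA: "lt h A \<subseteq> carrier G" using lt_sub[OF hc A_sub] .
  have "A - lt (g \<otimes> h) A \<subseteq> (A - lt g A) \<union> (lt g A - lt g (lt h A))"
    using lt_mult[OF gc hc A_sub] by auto
  also have "lt g A - lt g (lt h A) = lt g (A - lt h A)" by (rule lt_diff[OF gc A_sub ltA])
  finally have sub: "A - lt (g \<otimes> h) A \<subseteq> (A - lt g A) \<union> lt g (A - lt h A)" .
  have "card (A - lt (g \<otimes> h) A) \<le> card ((A - lt g A) \<union> lt g (A - lt h A))"
    by (rule card_mono[OF _ sub]) (use finA in \<open>auto simp: lt_def\<close>)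
  also have "\<dots> \<le> card (A - lt g A) + card (lt g (A - lt h A))" by (rule card_Un_le)
  also have "card (lt g (A - lt h A)) = card (A - lt h A)" by (rule card_lt[OF gc]) (use A_sub in auto)
  finally have "card A - m (g \<otimes> h) \<le> (card A - m g) + (card A - m h)"
    using A_diff_card gc hc ghc by simp
  then have "ra - real (m (g \<otimes> h)) \<le> (ra - real (m g)) + (ra - real (m h))"
    using m_le_A[of g] m_le_A[of h] m_le_A[of "g \<otimes> h"] by linarith
  then have "\<epsilon> * (ra - real (m (g \<otimes> h))) \<le> \<epsilon> * ((ra - real (m g)) + (ra - real (m h)))"
    using epos by (simp add: mult_left_mono)
  then have "\<epsilon> * ra - \<epsilon> * real (m (g \<otimes> h)) \<le> (\<epsilon> * ra - \<epsilon> * real (m g)) + (\<epsilon> * ra - \<epsilon> * real (m h))"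
    by (simp add: algebra_simps)
  then have "4 * re < \<epsilon> * real (m (g \<otimes> h))" using K1[OF g] K1[OF h] H2 De_nonneg by linarith
  then show ?thesis using ghc by (simp add: K_def)
qed

lemma lt_one: "Y \<subseteq> carrier G \<Longrightarrow> lt \<one> Y = Y"
proof -
  assume Y: "Y \<subseteq> carrier G"
  have "(\<lambda>x. \<one> \<otimes> x) ` Y = (\<lambda>x. x) ` Y" by (rule image_cong) (use Y in auto)
  then show ?thesis by (simp add: lt_def)
qed

lemma m_inv: assumes gc: "g \<in> carrier G" shows "m (inv g) = m g"
proof -
  have igc: "inv g \<in> carrier G" using gc by simp
  have ltA: "lt g A \<subseteq> carrier G" using lt_sub[OF gc A_sub] .
  have hback: "lt (inv g) (lt g A) = A" using lt_mult[OF igc gc A_sub] gc lt_one[OF A_sub] by simp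
  have "lt (inv g) (lt g A \<inter> A) = lt (inv g) (lt g A) \<inter> lt (inv g) A"
    unfolding lt_def by (rule inj_on_image_Int[OF lt_inj[OF igc] ltA[unfolded lt_def] A_sub])
  then have "A \<inter> lt (inv g) A = lt (inv g) (lt g A \<inter> A)" using hback by simp
  moreover have "card (lt (inv g) (lt g A \<inter> A)) = card (lt g A \<inter> A)" by (rule card_lt[OF igc]) (use ltA in auto)
  ultimately have "card (A \<inter> lt (inv g) A) = card (lt g A \<inter> A)" by simp
  then show ?thesis by (simp add: m_def Int_commute)
qed

lemma K5: "g \<in> K \<Longrightarrow> inv g \<in> K"
  using m_inv by (auto simp: K_def)

lemma K6: "\<one> \<in> K"
proof -
  have "(\<lambda>x. \<one> \<otimes> x) ` A = (\<lambda>x. x) ` A" by (rule image_cong) (use A_sub in auto)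
  then have "lt \<one> A = A" by (simp add: lt_def)
  then have "m \<one> = card A" by (simp add: m_def)
  moreover have "4 * re < \<epsilon> * ra" using H2 De_nonneg e_nonneg by linarith
  ultimately show ?thesis by (simp add: K_def)
qed

lemma dc:
  assumes "finite U" "finite V"
  shows "(\<Sum>x\<in>U. card {y\<in>V. P x y}) = (\<Sum>y\<in>V. card {x\<in>U. P x y})"
proof -
  have "(\<Sum>x\<in>U. card {y\<in>V. P x y}) = (\<Sum>x\<in>U. \<Sum>y\<in>V. if P x y then 1 else 0)"
    using assms by (simp add: sum.inter_filter[symmetric])
  also have "\<dots> = (\<Sum>y\<in>V. \<Sum>x\<in>U. if P x y then 1 else 0)" by (rule sum.swap)
  also have "\<dots> = (\<Sum>y\<in>V. card {x\<in>U. P x y})"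
    using assms by (simp add: sum.inter_filter[symmetric])
  finally show ?thesis .
qed

lemma m_alt: "g \<in> carrier G \<Longrightarrow> m g = card {b \<in> A. inv g \<otimes> b \<in> A}"
proof -
  assume g: "g \<in> carrier G"
  have "A \<inter> lt g A = {b \<in> A. inv g \<otimes> b \<in> A}"
  proof (intro equalityI subsetI)
    fix b assume b: "b \<in> A \<inter> lt g A"
    then obtain c where c: "c \<in> A" "b = g \<otimes> c" by (auto simp: lt_def)
    have "inv g \<otimes> b = c" using c g A_sub by (auto simp: m_assoc[symmetric])
    then show "b \<in> {b \<in> A. inv g \<otimes> b \<in> A}" using b c by auto
  next
    fix b assume b: "b \<in> {b \<in> A. inv g \<otimes> b \<in> A}"
    have "b = g \<otimes> (inv g \<otimes> b)" using b g A_sub by (auto simp: m_assoc[symmetric])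
    then show "b \<in> A \<inter> lt g A" using b by (auto simp: lt_def)
  qed
  then show ?thesis by (simp add: m_def)
qed

lemma fiber:
  assumes b: "b \<in> carrier G" and Y: "Y \<subseteq> carrier G"
  shows "card {g \<in> Y. inv g \<otimes> b \<in> A} = card {c \<in> A. b \<otimes> inv c \<in> Y}"
proof -
  have "{g \<in> Y. inv g \<otimes> b \<in> A} = (\<lambda>c. b \<otimes> inv c) ` {c \<in> A. b \<otimes> inv c \<in> Y}"
  proof (intro equalityI subsetI)
    fix g assume g: "g \<in> {g \<in> Y. inv g \<otimes> b \<in> A}"
    then have gc: "g \<in> carrier G" using Y by auto
    have "b \<otimes> inv (inv g \<otimes> b) = g" using gc b by (simp add: inv_mult_group m_assoc[symmetric])
    then show "g \<in> (\<lambda>c. b \<otimes> inv c) ` {c \<in> A. b \<otimes> inv c \<in> Y}" using g by (auto intro!: image_eqI[of g _ "inv g \<otimes> b"])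
  next
    fix g assume "g \<in> (\<lambda>c. b \<otimes> inv c) ` {c \<in> A. b \<otimes> inv c \<in> Y}"
    then obtain c where c: "c \<in> A" "b \<otimes> inv c \<in> Y" "g = b \<otimes> inv c" by auto
    have cc: "c \<in> carrier G" using c A_sub by auto
    have "inv g \<otimes> b = c" using c cc b by (simp add: inv_mult_group m_assoc)
    then show "g \<in> {g \<in> Y. inv g \<otimes> b \<in> A}" using c by auto
  qed
  moreover have "inj_on (\<lambda>c. b \<otimes> inv c) {c \<in> A. b \<otimes> inv c \<in> Y}"
  proof (rule inj_onI)
    fix c1 c2 assume c1: "c1 \<in> {c \<in> A. b \<otimes> inv c \<in> Y}" and c2: "c2 \<in> {c \<in> A. b \<otimes> inv c \<in> Y}"
      and e: "b \<otimes> inv c1 = b \<otimes> inv c2"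
    have "c1 \<in> carrier G" "c2 \<in> carrier G" using c1 c2 A_sub by auto
    moreover have "inv c1 = inv c2" using inj_onD[OF lt_inj[OF b] e] calculation by simp
    ultimately show "c1 = c2" by (metis inv_inv)
  qed
  ultimately show ?thesis by (simp add: card_image)
qed

lemma sum_m_all: "(\<Sum>g\<in>carrier G. m g) = card A * card A"
proof -
  have "(\<Sum>g\<in>carrier G. m g) = (\<Sum>g\<in>carrier G. card {b \<in> A. inv g \<otimes> b \<in> A})"
    by (rule sum.cong) (auto simp: m_alt)
  also have "\<dots> = (\<Sum>b\<in>A. card {g \<in> carrier G. inv g \<otimes> b \<in> A})" by (rule dc[OF fin finA])
  also have "\<dots> = (\<Sum>b\<in>A. card A)"
  proof (rule sum.cong[OF refl])
    fix b assume b: "b \<in> A"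
    then have bc: "b \<in> carrier G" using A_sub by auto
    have "card {g \<in> carrier G. inv g \<otimes> b \<in> A} = card {c \<in> A. b \<otimes> inv c \<in> carrier G}" by (rule fiber[OF bc]) auto
    also have "{c \<in> A. b \<otimes> inv c \<in> carrier G} = A" using bc A_sub by auto
    finally show "card {g \<in> carrier G. inv g \<otimes> b \<in> A} = card A" .
  qed
  finally show ?thesis by simp
qed


lemma ra_pos: "0 < ra"
proof -
  have "0 < \<epsilon> * ra" using H2 De_nonneg e_nonneg by (smt (verit) of_nat_0_le_iff)
  then show ?thesis using epos by (simp add: zero_less_mult_iff)
qed

lemma sum_real: "(\<Sum>g\<in>carrier G. \<epsilon> * real (m g)) = \<epsilon> * (ra * ra)"
proof -
  have "(\<Sum>g\<in>carrier G. real (m g)) = ra * ra" using sum_m_all by (metis of_nat_mult of_nat_sum)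
  then show ?thesis by (simp add: sum_distrib_left[symmetric])
qed

lemma finK: "finite K" using finX[OF K_sub] .

lemma sum_split: "(\<Sum>g\<in>carrier G. \<epsilon> * real (m g)) = (\<Sum>g\<in>K. \<epsilon> * real (m g)) + (\<Sum>g\<in>carrier G - K. \<epsilon> * real (m g))"
  using sum.subset_diff[OF K_sub fin, of "\<lambda>g. \<epsilon> * real (m g)"] by (simp add: add.commute)

lemma rN3: "rN \<le> 3 * ra"
proof -
  have "\<epsilon> * rN \<le> \<epsilon> * (3 * ra)" using GN H2 De_nonneg by linarith
  then show ?thesis using epos by simp
qed

lemma KL: "\<epsilon> * ra \<le> \<epsilon> * real (card K) + 12 * re"
proof -
  have s1: "(\<Sum>g\<in>K. \<epsilon> * real (m g)) \<le> (\<Sum>g\<in>K. \<epsilon> * ra)"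
    by (rule sum_mono) (use epos m_le_A in simp)
  have s2: "(\<Sum>g\<in>carrier G - K. \<epsilon> * real (m g)) \<le> (\<Sum>g\<in>carrier G - K. 4 * re)"
    by (rule sum_mono) (use K2 in auto)
  have cGK: "real (card (carrier G - K)) \<le> rN" using card_mono[OF fin, of "carrier G - K"] by auto
  have "(\<Sum>g\<in>carrier G - K. 4 * re) = real (card (carrier G - K)) * (4 * re)" by simp
  also have "\<dots> \<le> rN * (4 * re)" using cGK by (simp add: mult_right_mono)
  also have "\<dots> \<le> (3 * ra) * (4 * re)" by (rule mult_right_mono[OF rN3]) simp
  also have "(3 * ra) * (4 * re) = ra * (12 * re)" by simp
  finally have s3: "(\<Sum>g\<in>carrier G - K. \<epsilon> * real (m g)) \<le> ra * (12 * re)" using s2 by linarith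
  have "\<epsilon> * (ra * ra) \<le> real (card K) * (\<epsilon> * ra) + ra * (12 * re)"
    using sum_real sum_split s1 s3 by simp
  then have "ra * (\<epsilon> * ra) \<le> ra * (\<epsilon> * real (card K) + 12 * re)" by (simp add: algebra_simps)
  then show ?thesis using ra_pos by simp
qed

lemma KU: "\<epsilon> * real (card K) \<le> \<epsilon> * ra + 8 * (rD * re) + 4 * re"
proof (rule ccontr)
  assume nc: "\<not> ?thesis"
  have u2c1: "8 * (rD * re) + 4 * re \<le> \<epsilon> * ra" using H2 De_nonneg e_nonneg by linarith
  have u2c0: "2 * (4 * (rD * re) + 2 * re) \<le> \<epsilon> * ra" using u2c1 by simp
  have P01: "4 * (rD * re) + 2 * re < \<epsilon> * ra" using H2 De_nonneg e_nonneg by linarith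
  have P00: "0 < \<epsilon> * ra - (4 * (rD * re) + 2 * re)" using P01 by simp
  define c where "c = 4 * (rD * re) + 2 * re"
  define P where "P = \<epsilon> * ra - c"
  define u where "u = \<epsilon> * ra"
  define v where "v = \<epsilon> * real (card K)"
  have c0: "0 \<le> c" using De_nonneg by (simp add: c_def)
  have P0: "0 < P" using P00 unfolding P_def c_def u_def .
  have u2c: "2 * c \<le> u" using u2c0 unfolding P_def c_def u_def .
  have "(\<Sum>g\<in>K. P) \<le> (\<Sum>g\<in>K. \<epsilon> * real (m g))"
  proof (rule sum_mono)
    fix g assume "g \<in> K"
    from K1[OF this] show "P \<le> \<epsilon> * real (m g)" unfolding P_def c_def by linarith
  qed
  also have "\<dots> \<le> (\<Sum>g\<in>carrier G. \<epsilon> * real (m g))"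
    using sum_split sum_nonneg[of "carrier G - K" "\<lambda>g. \<epsilon> * real (m g)"] epos by simp
  finally have "real (card K) * P \<le> \<epsilon> * (ra * ra)" using sum_real by simp
  then have vP: "v * P \<le> u * u" using epos unfolding v_def u_def
    by (metis (no_types, opaque_lifting) mult.assoc mult.left_commute mult_left_mono less_eq_real_def)
  have "v > u + 2 * c" using nc by (simp add: v_def u_def c_def algebra_simps)
  then have "(u + 2 * c) * P < v * P" using P0 by (simp add: mult_strict_right_mono)
  moreover have "(u + 2 * c) * P = u * u + c * (u - 2 * c)" by (simp add: P_def u_def algebra_simps)
  moreover have "0 \<le> c * (u - 2 * c)" using c0 u2c by simp
  ultimately show False using vP by linarith
qed

lemma K3G: "rN < 3 * real (card K)"
proof -
  have "\<epsilon> * rN < \<epsilon> * (3 * real (card K))" using GN KL H2 De_nonneg by linarith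
  then show ?thesis using epos by simp
qed


lemma CL:
  assumes x: "x \<in> carrier G" and y: "y \<in> carrier G"
  shows "y \<otimes> inv x \<in> K \<longleftrightarrow> (x \<in> K \<longleftrightarrow> y \<in> K)"
proof (cases "x \<in> K")
  case True
  show ?thesis
  proof (cases "y \<in> K")
    case True
    then show ?thesis using K4[OF True K5[OF \<open>x \<in> K\<close>]] \<open>x \<in> K\<close> by simp
  next
    case False
    have "y \<otimes> inv x \<notin> K"
    proof
      assume "y \<otimes> inv x \<in> K"
      from K4[OF this True] have "y \<otimes> inv x \<otimes> x \<in> K" .
      also have "y \<otimes> inv x \<otimes> x = y" using x y by (simp add: m_assoc)
      finally show False using False by simp
    qed
    then show ?thesis using True False by simp
  qed
next
  case xK: False
  show ?thesis
  proof (cases "y \<in> K")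
    case True
    have "y \<otimes> inv x \<notin> K"
    proof
      assume "y \<otimes> inv x \<in> K"
      from K4[OF K5[OF True] this] have "inv y \<otimes> (y \<otimes> inv x) \<in> K" .
      also have "inv y \<otimes> (y \<otimes> inv x) = inv x" using x y by (simp add: m_assoc[symmetric])
      finally have "inv (inv x) \<in> K" using K5 by blast
      then show False using xK x by simp
    qed
    then show ?thesis using True xK by simp
  next
    case yK: False
    have "y \<otimes> inv x \<in> K"
    proof (rule ccontr)
      assume nK: "y \<otimes> inv x \<notin> K"
      define Kx where "Kx = (\<lambda>k. k \<otimes> x) ` K"
      define Ky where "Ky = (\<lambda>k. k \<otimes> y) ` K"
      have inj: "inj_on (\<lambda>k. k \<otimes> z) K" if "z \<in> carrier G" for z
      proof (rule inj_onI)
        fix k1 k2 assume "k1 \<in> K" "k2 \<in> K" "k1 \<otimes> z = k2 \<otimes> z"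
        then show "k1 = k2" using that K_sub right_cancel by blast
      qed
      have cKx: "card Kx = card K" unfolding Kx_def by (rule card_image[OF inj[OF x]])
      have cKy: "card Ky = card K" unfolding Ky_def by (rule card_image[OF inj[OF y]])
      have d1: "K \<inter> Kx = {}"
      proof (rule ccontr)
        assume "K \<inter> Kx \<noteq> {}"
        then obtain k k' where k: "k \<in> K" "k' \<in> K" "k = k' \<otimes> x" by (auto simp: Kx_def)
        have "inv k' \<otimes> k = x" using k K_sub x by (auto simp: m_assoc[symmetric])
        moreover have "inv k' \<otimes> k \<in> K" using K4[OF K5 k(1)] k(2) by blast
        ultimately show False using xK by simp
      qed
      have d2: "K \<inter> Ky = {}"
      proof (rule ccontr)
        assume "K \<inter> Ky \<noteq> {}"
        then obtain k k' where k: "k \<in> K" "k' \<in> K" "k = k' \<otimes> y" by (auto simp: Ky_def)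
        have "inv k' \<otimes> k = y" using k K_sub y by (auto simp: m_assoc[symmetric])
        moreover have "inv k' \<otimes> k \<in> K" using K4[OF K5 k(1)] k(2) by blast
        ultimately show False using yK by simp
      qed
      have d3: "Kx \<inter> Ky = {}"
      proof (rule ccontr)
        assume "Kx \<inter> Ky \<noteq> {}"
        then obtain k k' where k: "k \<in> K" "k' \<in> K" "k \<otimes> x = k' \<otimes> y" by (auto simp: Kx_def Ky_def)
        have kc: "k \<in> carrier G" "k' \<in> carrier G" using k K_sub by auto
        have "inv k' \<otimes> k = y \<otimes> inv x"
        proof -
          have "inv k' \<otimes> (k \<otimes> x) \<otimes> inv x = inv k' \<otimes> (k' \<otimes> y) \<otimes> inv x" using k by simp
          then have e1: "inv k' \<otimes> k \<otimes> x = y" using kc x y by (simp add: m_assoc[symmetric])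
          have "y \<otimes> inv x = inv k' \<otimes> k \<otimes> x \<otimes> inv x" using e1 by simp
          also have "\<dots> = inv k' \<otimes> k" using kc x by (simp add: m_assoc)
          finally show ?thesis by simp
        qed
        moreover have "inv k' \<otimes> k \<in> K" using K4[OF K5 k(1)] k(2) by blast
        ultimately show False using nK by simp
      qed
      have sub: "K \<union> Kx \<union> Ky \<subseteq> carrier G" using K_sub x y by (auto simp: Kx_def Ky_def)
      have fKx: "finite Kx" "finite Ky" using finK by (auto simp: Kx_def Ky_def)
      have "card (K \<union> Kx \<union> Ky) = card K + card Kx + card Ky"
        using d1 d2 d3 finK fKx by (simp add: card_Un_disjoint Int_Un_distrib2)
      moreover have "card (K \<union> Kx \<union> Ky) \<le> card (carrier G)" by (rule card_mono[OF fin sub])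
      ultimately have "3 * card K \<le> card (carrier G)" using cKx cKy by simp
      then show False using K3G by linarith
    qed
    then show ?thesis using xK yK by simp
  qed
qed

lemma sum_K: "(\<Sum>g\<in>K. m g) = card (A \<inter> K) * card (A \<inter> K) + card (A - K) * card (A - K)"
proof -
  have "(\<Sum>g\<in>K. m g) = (\<Sum>g\<in>K. card {b \<in> A. inv g \<otimes> b \<in> A})"
    by (rule sum.cong) (use K_sub m_alt in auto)
  also have "\<dots> = (\<Sum>b\<in>A. card {g \<in> K. inv g \<otimes> b \<in> A})" by (rule dc[OF finK finA])
  also have "\<dots> = (\<Sum>b\<in>A. if b \<in> K then card (A \<inter> K) else card (A - K))"
  proof (rule sum.cong[OF refl])
    fix b assume b: "b \<in> A"
    then have bc: "b \<in> carrier G" using A_sub by auto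
    have "card {g \<in> K. inv g \<otimes> b \<in> A} = card {c \<in> A. b \<otimes> inv c \<in> K}" by (rule fiber[OF bc K_sub])
    also have "{c \<in> A. b \<otimes> inv c \<in> K} = {c \<in> A. c \<in> K \<longleftrightarrow> b \<in> K}"
      using CL[OF _ bc] A_sub by auto
    finally show "card {g \<in> K. inv g \<otimes> b \<in> A} = (if b \<in> K then card (A \<inter> K) else card (A - K))"
      by (cases "b \<in> K") (auto simp: Int_def set_diff_eq)
  qed
  also have "\<dots> = (\<Sum>b\<in>A \<inter> K. card (A \<inter> K)) + (\<Sum>b\<in>A - K. card (A - K))"
    by (simp add: sum.If_cases finA Int_def set_diff_eq)
  finally show ?thesis by simp
qed


lemma min_bound: "\<epsilon> * real (min (card (A \<inter> K)) (card (A - K))) \<le> 4 * (rD * re) + 14 * re"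
proof -
  define x where "x = real (card (A \<inter> K))"
  define y where "y = real (card (A - K))"
  define c where "c = 4 * (rD * re) + 2 * re"
  define P where "P = \<epsilon> * ra - c"
  define L where "L = \<epsilon> * ra - 12 * re"
  define k where "k = real (card K)"
  have xy: "x + y = ra" unfolding x_def y_def using card_Int_Diff[OF finA, of K] by simp
  have x0: "0 \<le> x" and y0: "0 \<le> y" by (auto simp: x_def y_def)
  have c0: "0 \<le> c" using De_nonneg e_nonneg by (simp add: c_def)
  have P01: "4 * (rD * re) + 2 * re < \<epsilon> * ra" using H2 De_nonneg e_nonneg by linarith
  then have P0: "0 < P" by (simp add: P_def c_def)
  have L01: "12 * re < \<epsilon> * ra" using H2 De_nonneg e_nonneg by linarith
  then have L0: "0 < L" by (simp add: L_def)
  have kL: "L \<le> \<epsilon> * k" using KL by (simp add: L_def k_def)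
  have s1: "(\<Sum>g\<in>K. \<epsilon> * real (m g)) = \<epsilon> * (x * x + y * y)"
  proof -
    have "(\<Sum>g\<in>K. real (m g)) = x * x + y * y" unfolding x_def y_def
      using sum_K by (metis of_nat_add of_nat_mult of_nat_sum)
    then show ?thesis by (simp add: sum_distrib_left[symmetric])
  qed
  have s2: "k * P \<le> (\<Sum>g\<in>K. \<epsilon> * real (m g))"
  proof -
    have "(\<Sum>g\<in>K. P) \<le> (\<Sum>g\<in>K. \<epsilon> * real (m g))"
    proof (rule sum_mono)
      fix g assume "g \<in> K"
      from K1[OF this] show "P \<le> \<epsilon> * real (m g)" unfolding P_def c_def by linarith
    qed
    then show ?thesis by (simp add: k_def)
  qed
  have "L * P \<le> (\<epsilon> * k) * P" using kL P0 by (simp add: mult_right_mono)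
  also have "\<dots> = \<epsilon> * (k * P)" by simp
  also have "\<dots> \<le> \<epsilon> * (\<epsilon> * (x * x + y * y))" using s1 s2 epos by (simp add: mult_left_mono)
  finally have LP: "L * P \<le> \<epsilon> * (\<epsilon> * (x * x + y * y))" .
  have LP2: "L * P = (\<epsilon> * ra) * (\<epsilon> * ra) - (\<epsilon> * ra) * (12 * re + c) + 12 * re * c"
    by (simp add: L_def P_def algebra_simps)
  have sq: "(\<epsilon> * ra) * (\<epsilon> * ra) = \<epsilon> * (\<epsilon> * (x * x + y * y)) + 2 * \<epsilon> * (\<epsilon> * (x * y))"
    unfolding xy[symmetric] by (simp add: algebra_simps)
  have "0 \<le> 12 * re * c" using c0 by simp
  then have "2 * \<epsilon> * (\<epsilon> * (x * y)) \<le> (\<epsilon> * ra) * (12 * re + c)" using LP LP2 sq by linarith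
  then have "\<epsilon> * (2 * \<epsilon> * (x * y)) \<le> \<epsilon> * (ra * (12 * re + c))" by (simp add: algebra_simps)
  then have h2: "2 * \<epsilon> * (x * y) \<le> ra * (12 * re + c)" using epos by simp
  have mm: "min x y * ra \<le> 2 * (x * y)"
  proof (cases "x \<le> y")
    case True
    then have "x * x \<le> x * y" using x0 by (simp add: mult_left_mono)
    then show ?thesis using True xy[symmetric] by (simp add: algebra_simps)
  next
    case False
    then have "y * y \<le> x * y" using y0 by (simp add: mult_right_mono)
    then show ?thesis using False xy[symmetric] by (simp add: algebra_simps)
  qed
  have "ra * (\<epsilon> * min x y) = \<epsilon> * (min x y * ra)" by simp
  also have "\<dots> \<le> \<epsilon> * (2 * (x * y))" using mm epos by (simp add: mult_left_mono)
  also have "\<dots> \<le> ra * (12 * re + c)" using h2 by simp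
  finally have "ra * (\<epsilon> * min x y) \<le> ra * (12 * re + c)" .
  then have "\<epsilon> * min x y \<le> 12 * re + c" using ra_pos by simp
  moreover have "real (min (card (A \<inter> K)) (card (A - K))) = min x y" by (simp add: x_def y_def)
  ultimately show ?thesis by (simp add: c_def)
qed

lemma final_Q:
  assumes Q: "Q \<subseteq> carrier G" and \<sigma>Q: "\<And>g. g \<in> Q \<Longrightarrow> \<sigma> g \<in> Q"
    and AQ: "\<epsilon> * real (card (A - Q)) \<le> 4 * (rD * re) + 14 * re"
    and cQ: "\<epsilon> * real (card Q) \<le> \<epsilon> * ra + 10 * (rD * re) + 16 * re"
  shows False
proof -
  have finQ: "finite Q" using finX[OF Q] .
  have "B - Q \<subseteq> \<sigma> ` (A - Q)" using \<sigma>Q by (auto simp: B_def)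
  then have "card (B - Q) \<le> card (\<sigma> ` (A - Q))" by (rule card_mono[rotated]) (use finA in simp)
  also have "\<dots> \<le> card (A - Q)" by (rule card_image_le) (use finA in simp)
  finally have BQ: "card (B - Q) \<le> card (A - Q)" .
  have cAQ: "card (A \<inter> Q) + card (A - Q) = card A" using card_Int_Diff[OF finA, of Q] by simp
  have cBQ: "card (B \<inter> Q) + card (B - Q) = card A" using card_Int_Diff[OF finB, of Q] card_B by simp
  have "card ((A \<inter> Q) \<union> (B \<inter> Q)) + card ((A \<inter> Q) \<inter> (B \<inter> Q)) = card (A \<inter> Q) + card (B \<inter> Q)"
    using card_Un_Int[of "A \<inter> Q" "B \<inter> Q"] finA finB by simp
  moreover have "card ((A \<inter> Q) \<union> (B \<inter> Q)) \<le> card Q" by (rule card_mono[OF finQ]) auto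
  moreover have "card ((A \<inter> Q) \<inter> (B \<inter> Q)) \<le> card (A \<inter> B)" by (rule card_mono) (use finA in auto)
  ultimately have "2 * card A \<le> card Q + card (A \<inter> B) + 2 * card (A - Q)" using cAQ cBQ BQ by linarith
  then have "2 * ra \<le> real (card Q) + real (card (A \<inter> B)) + 2 * real (card (A - Q))"
    by linarith
  then have "\<epsilon> * (2 * ra) \<le> \<epsilon> * (real (card Q) + real (card (A \<inter> B)) + 2 * real (card (A - Q)))"
    using epos by (simp add: mult_left_mono)
  then have "2 * (\<epsilon> * ra) \<le> \<epsilon> * real (card Q) + \<epsilon> * real (card (A \<inter> B)) + 2 * (\<epsilon> * real (card (A - Q)))"
    by (simp add: algebra_simps)
  then show False using AQ cQ iAB H2 De_nonneg e_nonneg by linarith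
qed

lemma contra: False
proof (cases "card (A \<inter> K) \<le> card (A - K)")
  case True
  let ?Q = "carrier G - K"
  have Q: "?Q \<subseteq> carrier G" by auto
  have \<sigma>Q: "\<sigma> g \<in> ?Q" if "g \<in> ?Q" for g
  proof -
    have gc: "g \<in> carrier G" "g \<notin> K" using that by auto
    have "\<sigma> g \<notin> K"
    proof
      assume "\<sigma> g \<in> K"
      from K3[OF this] have "\<sigma> (\<sigma> g) \<in> K" .
      then show False using \<sigma>_inv[OF gc(1)] gc(2) by simp
    qed
    then show ?thesis using \<sigma>_car[OF gc(1)] by simp
  qed
  have "A - ?Q = A \<inter> K" using A_sub by auto
  then have AQ: "\<epsilon> * real (card (A - ?Q)) \<le> 4 * (rD * re) + 14 * re" using min_bound True by simp
  have "card ?Q = card (carrier G) - card K" using K_sub fin by (simp add: card_Diff_subset finK)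
  then have "real (card ?Q) = rN - real (card K)" using card_mono[OF fin K_sub] by simp
  then have "\<epsilon> * real (card ?Q) = \<epsilon> * rN - \<epsilon> * real (card K)" by (simp add: right_diff_distrib)
  then have cQ: "\<epsilon> * real (card ?Q) \<le> \<epsilon> * ra + 10 * (rD * re) + 16 * re"
    using GN KL De_nonneg e_nonneg by linarith
  show False by (rule final_Q[OF Q \<sigma>Q AQ cQ])
next
  case False
  have AQ: "\<epsilon> * real (card (A - K)) \<le> 4 * (rD * re) + 14 * re" using min_bound False by simp
  have cQ: "\<epsilon> * real (card K) \<le> \<epsilon> * ra + 10 * (rD * re) + 16 * re"
    using KU De_nonneg e_nonneg by linarith
  show False by (rule final_Q[OF K_sub K3 AQ cQ])
qed

end


lemma (in exp_setup) main:
  assumes A: "A \<subseteq> carrier G" and Ah: "real (card A) \<le> real (card (carrier G)) / 2"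
  shows "\<epsilon> * real (card A) \<le> 100 * (real d + 1) * real (card {y \<in> carrier G - A. \<exists>a\<in>A. \<exists>t\<in>T. y = \<sigma> (a \<otimes> t)})"
proof (rule ccontr)
  assume "\<not> ?thesis"
  then have H: "100 * (real d + 1) * real (card {y \<in> carrier G - A. \<exists>a\<in>A. \<exists>t\<in>T. y = \<sigma> (a \<otimes> t)}) < \<epsilon> * real (card A)" by simp
  interpret exp_contra G S T \<sigma> d \<epsilon> A
    by (unfold_locales) (use A Ah H in auto)
  show False by (rule contra)
qed

context twist_setup
begin

interpretation group G by (rule grp)

lemma comp_over_empty: "comp_over s {} = id" by (simp add: comp_over_def)
lemma comp_over_single: "comp_over s {i} = s i" by (simp add: comp_over_def)

lemma T_sub: "S \<subseteq> carrier G \<Longrightarrow> twist_closure s k S \<subseteq> carrier G"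
  unfolding twist_closure_def using comp_over_car by blast

lemma T_S: "S \<subseteq> twist_closure s k S"
proof
  fix x assume "x \<in> S"
  then have "x \<in> comp_over s {} ` S" by (simp add: comp_over_empty)
  then show "x \<in> twist_closure s k S" unfolding twist_closure_def by blast
qed

lemma T_sS: "i \<in> {1..k} \<Longrightarrow> x \<in> S \<Longrightarrow> s i x \<in> twist_closure s k S"
proof -
  assume i: "i \<in> {1..k}" and x: "x \<in> S"
  then have "s i x \<in> comp_over s {i} ` S" by (simp add: comp_over_single)
  then show ?thesis unfolding twist_closure_def using i by blast
qed

lemma T_s: assumes S: "S \<subseteq> carrier G" and i: "i \<in> {1..k}" and t: "t \<in> twist_closure s k S"
  shows "s i t \<in> twist_closure s k S"
proof -
  obtain I x where I: "I \<subseteq> {1..k}" and x: "x \<in> S" and tx: "t = comp_over s I x"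
    using t unfolding twist_closure_def by auto
  obtain J where J: "J \<subseteq> {1..k}" "s i (comp_over s I x) = comp_over s J x"
    using comp_over_s[OF I i] x S by blast
  then show ?thesis using tx x unfolding twist_closure_def by auto
qed

lemma T_inv: assumes S: "S \<subseteq> carrier G" and Ss: "\<And>x. x \<in> S \<Longrightarrow> inv x \<in> S"
  and t: "t \<in> twist_closure s k S"
  shows "inv t \<in> twist_closure s k S"
proof -
  obtain I x where I: "I \<subseteq> {1..k}" and x: "x \<in> S" and tx: "t = comp_over s I x"
    using t unfolding twist_closure_def by auto
  have "inv t = comp_over s I (inv x)" using comp_over_inv[OF I] x S tx by auto
  then show ?thesis using I Ss[OF x] unfolding twist_closure_def by auto
qed

lemma T_card: assumes "finite S" shows "card (twist_closure s k S) \<le> 2 ^ k * card S"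
proof -
  have "card (twist_closure s k S) \<le> (\<Sum>I\<in>Pow {1..k}. card (comp_over s I ` S))"
    unfolding twist_closure_def by (rule card_UN_le) simp
  also have "\<dots> \<le> (\<Sum>I\<in>Pow {1..k}. card S)" by (rule sum_mono) (rule card_image_le[OF assms])
  also have "\<dots> = 2 ^ k * card S" by (simp add: card_Pow)
  finally show ?thesis .
qed

end


lemma adj_sym:
  fixes G :: "('a, 'b) monoid_scheme" (structure)
  assumes grp: "group G" and hom: "\<sigma> \<in> hom G G" and inv2: "\<And>x. x \<in> carrier G \<Longrightarrow> \<sigma> (\<sigma> x) = x"
    and T: "T \<subseteq> carrier G" and Ti: "\<And>t. t \<in> T \<Longrightarrow> inv t \<in> T" and Ts: "\<And>t. t \<in> T \<Longrightarrow> \<sigma> t \<in> T"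
    and a: "cayley_adj G T \<sigma> x y"
  shows "cayley_adj G T \<sigma> y x"
proof -
  interpret group G by (rule grp)
  have sc: "\<And>x. x \<in> carrier G \<Longrightarrow> \<sigma> x \<in> carrier G" using hom by (auto simp: hom_def)
  have sm: "\<And>x y. x \<in> carrier G \<Longrightarrow> y \<in> carrier G \<Longrightarrow> \<sigma> (x \<otimes> y) = \<sigma> x \<otimes> \<sigma> y" using hom by (auto simp: hom_def)
  obtain t where x: "x \<in> carrier G" and t: "t \<in> T" and y: "y = \<sigma> (x \<otimes> t)" using a by (auto simp: cayley_adj_def)
  have tc: "t \<in> carrier G" using t T by auto
  have yc: "y \<in> carrier G" using x tc sc y by auto
  have t': "\<sigma> (inv t) \<in> T" using Ts Ti t by auto
  have "\<sigma> (y \<otimes> \<sigma> (inv t)) = \<sigma> y \<otimes> \<sigma> (\<sigma> (inv t))" using sm yc sc tc by simp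
  also have "\<dots> = (x \<otimes> t) \<otimes> inv t" using inv2 x tc y by simp
  also have "\<dots> = x" using x tc by (simp add: m_assoc)
  finally show ?thesis using yc t' unfolding cayley_adj_def by auto
qed

lemma adj_deg:
  fixes G :: "('a, 'b) monoid_scheme" (structure)
  assumes "finite T"
  shows "card {y \<in> V. cayley_adj G T \<sigma> x y} \<le> card T"
proof -
  have "{y \<in> V. cayley_adj G T \<sigma> x y} \<subseteq> (\<lambda>t. \<sigma> (x \<otimes> t)) ` T" by (auto simp: cayley_adj_def)
  then have "card {y \<in> V. cayley_adj G T \<sigma> x y} \<le> card ((\<lambda>t. \<sigma> (x \<otimes> t)) ` T)"
    by (rule card_mono[rotated]) (use assms in simp)
  also have "\<dots> \<le> card T" by (rule card_image_le[OF assms])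
  finally show ?thesis .
qed

theorem theorem8p2:
  fixes G :: "nat \<Rightarrow> ('a, 'b) monoid_scheme"
    and S :: "nat \<Rightarrow> 'a set"
    and \<sigma> :: "nat \<Rightarrow> nat \<Rightarrow> 'a \<Rightarrow> 'a"
    and d k :: nat
  assumes grp: "\<And>n. group (G n)"
    and fin: "\<And>n. finite (carrier (G n))"
    and S_sub: "\<And>n. S n \<subseteq> carrier (G n)"
    and S_sym: "\<And>n s. s \<in> S n \<Longrightarrow> inv\<^bsub>G n\<^esub> s \<in> S n"
    and exp: "expander_family (\<lambda>n. carrier (G n)) (\<lambda>n. cayley_adj (G n) (S n) id) d"
    and k2: "k \<ge> 2"
    and aut: "\<And>n i. i \<in> {1..k} \<Longrightarrow> \<sigma> i n \<in> iso (G n) (G n)"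
    and ord2: "\<And>n i x. i \<in> {1..k} \<Longrightarrow> x \<in> carrier (G n) \<Longrightarrow> \<sigma> i n (\<sigma> i n x) = x"
    and comm: "\<And>n i j x. i \<in> {1..k} \<Longrightarrow> j \<in> {1..k} \<Longrightarrow> x \<in> carrier (G n) \<Longrightarrow>
                 \<sigma> i n (\<sigma> j n x) = \<sigma> j n (\<sigma> i n x)"
  shows "(\<forall>i \<in> {1..k}.
            expander_family (\<lambda>n. carrier (G n))
              (\<lambda>n. cayley_adj (G n) (twist_closure (\<lambda>i. \<sigma> i n) k (S n)) (\<sigma> i n)) (2 ^ k * d))
       \<and> (\<forall>i \<in> {1..k}. \<forall>j \<in> {1..k}. \<forall>n.
            equal_up_to_sign
              (eigenvalues_mset (cayley_adj_matrix (G n) (twist_closure (\<lambda>i. \<sigma> i n) k (S n)) (\<sigma> i n)))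
              (eigenvalues_mset (cayley_adj_matrix (G n) (twist_closure (\<lambda>i. \<sigma> i n) k (S n)) (\<sigma> j n))))"
proof -
  define Tn where "Tn n = twist_closure (\<lambda>i. \<sigma> i n) k (S n)" for n
  from exp have deg: "\<And>n. undirected_bounded_degree (carrier (G n)) (cayley_adj (G n) (S n) id) d"
    unfolding expander_family_def by auto
  from exp obtain \<epsilon> where epos: "\<epsilon> > 0"
    and vex: "\<And>n. vertex_expander (carrier (G n)) (cayley_adj (G n) (S n) id) \<epsilon>"
    unfolding expander_family_def by auto
  have ts: "twist_setup (G n) (\<lambda>i. \<sigma> i n) k" for n
    unfolding twist_setup_def using grp aut ord2 comm by blast
  have hom: "\<sigma> i n \<in> hom (G n) (G n)" if "i \<in> {1..k}" for i n
    using aut[OF that] by (auto simp: iso_def)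
  have T_sub: "Tn n \<subseteq> carrier (G n)" for n
    unfolding Tn_def by (rule twist_setup.T_sub[OF ts S_sub])
  have T_s: "\<sigma> i n t \<in> Tn n" if "i \<in> {1..k}" "t \<in> Tn n" for i n t
    using twist_setup.T_s[OF ts S_sub that(1)] that(2) unfolding Tn_def by simp
  have T_inv: "inv\<^bsub>G n\<^esub> t \<in> Tn n" if "t \<in> Tn n" for n t
    using twist_setup.T_inv[OF ts S_sub S_sym] that unfolding Tn_def by blast
  have Scard: "card (S n) \<le> d" for n
  proof -
    interpret group "G n" by (rule grp)
    have "{y \<in> carrier (G n). cayley_adj (G n) (S n) id \<one>\<^bsub>G n\<^esub> y} = S n"
      using S_sub[of n] by (force simp: cayley_adj_def)
    then show ?thesis using deg[of n] unfolding undirected_bounded_degree_def by (metis one_closed)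
  qed
  have finS: "finite (S n)" for n using S_sub fin finite_subset by blast
  have Tcard: "card (Tn n) \<le> 2 ^ k * d" for n
  proof -
    have "card (Tn n) \<le> 2 ^ k * card (S n)" unfolding Tn_def by (rule twist_setup.T_card[OF ts finS])
    also have "\<dots> \<le> 2 ^ k * d" using Scard by simp
    finally show ?thesis .
  qed
  have es: "exp_setup (G n) (S n) (Tn n) (\<sigma> i n) d \<epsilon>" if i: "i \<in> {1..k}" for n i
  proof (rule exp_setup.intro)
    show "group (G n)" by (rule grp)
    show "finite (carrier (G n))" by (rule fin)
    show "S n \<subseteq> carrier (G n)" by (rule S_sub)
    show "\<And>s. s \<in> S n \<Longrightarrow> inv\<^bsub>G n\<^esub> s \<in> S n" by (rule S_sym)
    show "card (S n) \<le> d" by (rule Scard)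
    show "0 < \<epsilon>" by (rule epos)
    show "\<sigma> i n \<in> hom (G n) (G n)" by (rule hom[OF i])
    show "\<And>x. x \<in> carrier (G n) \<Longrightarrow> \<sigma> i n (\<sigma> i n x) = x" by (rule ord2[OF i])
    show "Tn n \<subseteq> carrier (G n)" by (rule T_sub)
    show "S n \<subseteq> Tn n" unfolding Tn_def by (rule twist_setup.T_S[OF ts])
    show "\<And>s. s \<in> S n \<Longrightarrow> \<sigma> i n s \<in> Tn n" unfolding Tn_def by (rule twist_setup.T_sS[OF ts i])
    fix X assume X: "X \<subseteq> carrier (G n)" and Xh: "real (card X) \<le> real (card (carrier (G n))) / 2"
    have "vertex_boundary (carrier (G n)) (cayley_adj (G n) (S n) id) X
        = {y \<in> carrier (G n) - X. \<exists>x\<in>X. \<exists>s\<in>S n. y = x \<otimes>\<^bsub>G n\<^esub> s}"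
      using X by (auto simp: vertex_boundary_def cayley_adj_def)
    then show "\<epsilon> * real (card X) \<le> real (card {y \<in> carrier (G n) - X. \<exists>x\<in>X. \<exists>s\<in>S n. y = x \<otimes>\<^bsub>G n\<^esub> s})"
      using vex[of n] X Xh unfolding vertex_expander_def by auto
  qed
  have part1: "expander_family (\<lambda>n. carrier (G n)) (\<lambda>n. cayley_adj (G n) (Tn n) (\<sigma> i n)) (2 ^ k * d)"
    if i: "i \<in> {1..k}" for i
    unfolding expander_family_def
  proof (intro conjI allI)
    fix n
    show "undirected_bounded_degree (carrier (G n)) (cayley_adj (G n) (Tn n) (\<sigma> i n)) (2 ^ k * d)"
      unfolding undirected_bounded_degree_def
    proof (intro conjI ballI allI impI)
      show "finite (carrier (G n))" by (rule fin)
      fix x y assume "x \<in> carrier (G n)" "y \<in> carrier (G n)"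
      show "cayley_adj (G n) (Tn n) (\<sigma> i n) x y = cayley_adj (G n) (Tn n) (\<sigma> i n) y x"
        using adj_sym[OF grp hom[OF i] ord2[OF i] T_sub T_inv T_s[OF i]] by blast
    next
      fix x y assume a: "cayley_adj (G n) (Tn n) (\<sigma> i n) x y"
      then show "x \<in> carrier (G n)" by (simp add: cayley_adj_def)
      show "y \<in> carrier (G n)"
      proof -
        interpret group "G n" by (rule grp)
        from a obtain t where "x \<in> carrier (G n)" "t \<in> Tn n" "y = \<sigma> i n (x \<otimes>\<^bsub>G n\<^esub> t)"
          by (auto simp: cayley_adj_def)
        moreover have "x \<otimes>\<^bsub>G n\<^esub> t \<in> carrier (G n)" using calculation T_sub by blast
        ultimately show ?thesis using hom[OF i, of n] by (auto simp: hom_def Pi_def)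
      qed
    next
      fix x assume "x \<in> carrier (G n)"
      have "card {y \<in> carrier (G n). cayley_adj (G n) (Tn n) (\<sigma> i n) x y} \<le> card (Tn n)"
        by (rule adj_deg) (use T_sub fin finite_subset in blast)
      then show "card {y \<in> carrier (G n). cayley_adj (G n) (Tn n) (\<sigma> i n) x y} \<le> 2 ^ k * d"
        using Tcard[of n] by linarith
    qed
  next
    show "\<exists>\<epsilon>'>0. \<forall>n. vertex_expander (carrier (G n)) (cayley_adj (G n) (Tn n) (\<sigma> i n)) \<epsilon>'"
    proof (intro exI conjI allI)
      show "0 < \<epsilon> / (100 * (real d + 1))" using epos by simp
      fix n
      show "vertex_expander (carrier (G n)) (cayley_adj (G n) (Tn n) (\<sigma> i n)) (\<epsilon> / (100 * (real d + 1)))"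
        unfolding vertex_expander_def
      proof (intro allI impI)
        fix A assume A: "A \<subseteq> carrier (G n)" and Ah: "real (card A) \<le> real (card (carrier (G n))) / 2"
        have vb: "vertex_boundary (carrier (G n)) (cayley_adj (G n) (Tn n) (\<sigma> i n)) A
            = {y \<in> carrier (G n) - A. \<exists>a\<in>A. \<exists>t\<in>Tn n. y = \<sigma> i n (a \<otimes>\<^bsub>G n\<^esub> t)}"
          using A by (auto simp: vertex_boundary_def cayley_adj_def)
        have M: "\<epsilon> * real (card A) \<le> 100 * (real d + 1) * real (card {y \<in> carrier (G n) - A. \<exists>a\<in>A. \<exists>t\<in>Tn n. y = \<sigma> i n (a \<otimes>\<^bsub>G n\<^esub> t)})"
          by (rule exp_setup.main[OF es[OF i] A Ah])
        have pos: "0 < 100 * (real d + 1)" by simp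
        show "\<epsilon> / (100 * (real d + 1)) * real (card A) \<le> real (card (vertex_boundary (carrier (G n)) (cayley_adj (G n) (Tn n) (\<sigma> i n)) A))"
          unfolding vb using M pos by (simp add: field_simps)
      qed
    qed
  qed
  have part2: "equal_up_to_sign (eigenvalues_mset (cayley_adj_matrix (G n) (Tn n) (\<sigma> i n)))
      (eigenvalues_mset (cayley_adj_matrix (G n) (Tn n) (\<sigma> j n)))"
    if i: "i \<in> {1..k}" and j: "j \<in> {1..k}" for i j n
    by (rule part2[OF grp fin T_sub hom[OF i] ord2[OF i] T_s[OF i] hom[OF j] ord2[OF j] T_s[OF j]])
  show ?thesis using part1 part2 unfolding Tn_def by blast
qed


end
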